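(* Let $\mathcal{U}$ be a quasitriangular Hopf algebra with universal R-matrix $\mathcal{R}$, $\mathcal{H}\subset\mathcal{U}$ a Hopf subalgebra, $\mathcal{L}$ a base algebra over $\mathcal{H}$, and $\bar{\mathcal{F}}\in\mathcal{U}\otimes\mathcal{U}\otimes\mathcal{L}$ a universal dynamical twist. Then $\bar{\mathcal{R}}:=\bar{\mathcal{F}}_{21}^{-1}\mathcal{R}\bar{\mathcal{F}}\in\mathcal{U}\otimes\mathcal{U}\otimes\mathcal{L}$ is a universal quantum dynamical R-matrix of $\mathcal{U}$ over $\mathcal{L}$.
   Context: Hopf algebras are over a commutative ring $k$ (over a field of characteristic zero), Sweedler notation $\Delta(x)=x^{(1)}\otimes x^{(2)}$; $\mathcal{R}$ satisfies $\mathcal{R}\Delta(x)=\Delta^{op}(x)\mathcal{R}$, $(\Delta\otimes\mathrm{id})\mathcal{R}=\mathcal{R}_{13}\mathcal{R}_{23}$, $(\mathrm{id}\otimes\Delta)\mathcal{R}=\mathcal{R}_{13}\mathcal{R}_{12}$. A base algebra over $\mathcal{H}$ is a left $\mathcal{H}$-module algebra and left $\mathcal{H}$-comodule algebra $\mathcal{L}$ (action $\triangleright$, coaction $\ell\mapsto\ell^{(1)}\otimes\ell^{[2]}$) with $\{x^{(1)}\triangleright\ell\}^{(1)}x^{(2)}\otimes\{x^{(1)}\triangleright\ell\}^{[2]}=x^{(1)}\ell^{(1)}\otimes x^{(2)}\triangleright\ell^{[2]}$ and $\ell_1\ell_2=(\ell_1^{(1)}\triangleright\ell_2)\ell_1^{[2]}$.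 All products are in the algebras $\mathcal{U}^{\otimes n}\otimes\mathcal{L}$; $\mathcal{R}$ is identified with $\mathcal{R}\otimes1\in\mathcal{U}\otimes\mathcal{U}\otimes\mathcal{L}$. For $X=X_1\otimes X_2\otimes X_3\in\mathcal{U}\otimes\mathcal{U}\otimes\mathcal{L}$ (summation implicit): $X_{21}=X_2\otimes X_1\otimes X_3$; in $\mathcal{U}^{\otimes3}\otimes\mathcal{L}$, $X_{12}=X_1\otimes X_2\otimes1\otimes X_3$, $X_{13}=X_1\otimes1\otimes X_2\otimes X_3$, $X_{23}=1\otimes X_1\otimes X_2\otimes X_3$, ${}^{(3)}X=X_1\otimes X_2\otimes X_3^{(1)}\otimes X_3^{[2]}$, ${}^{(2)}X=X_1\otimes X_3^{(1)}\otimes X_2\otimes X_3^{[2]}$, ${}^{(1)}X=X_3^{(1)}\otimes X_1\otimes X_2\otimes X_3^{[2]}$. A universal dynamical twist is an invertible $\bar{\mathcal{F}}$ with $h^{(1)}\bar{\mathcal{F}}_1\otimes h^{(2)}\bar{\mathcal{F}}_2\otimes h^{(3)}\triangleright\bar{\mathcal{F}}_3=\bar{\mathcal{F}}_1h^{(1)}\otimes\bar{\mathcal{F}}_2h^{(2)}\otimes\bar{\mathcal{F}}_3$ for $h\in\mathcal{H}$, $(\Delta\otimes\mathrm{id})(\bar{\mathcal{F}})\,{}^{(3)}\!\bar{\mathcal{F}}=(\mathrm{id}\otimes\Delta)(\bar{\mathcal{F}})\,\bar{\mathcal{F}}_{23}$ (with $\Delta$ applied to $\mathcal{U}$-factors),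 and $(\varepsilon\otimes\mathrm{id}\otimes\mathrm{id})(\bar{\mathcal{F}})=1\otimes1=(\mathrm{id}\otimes\varepsilon\otimes\mathrm{id})(\bar{\mathcal{F}})$. A universal quantum dynamical R-matrix over $\mathcal{L}$ is $\bar{\mathcal{R}}\in\mathcal{U}\otimes\mathcal{U}\otimes\mathcal{L}$ with $h^{(2)}\bar{\mathcal{R}}_1\otimes h^{(1)}\bar{\mathcal{R}}_2\otimes h^{(3)}\triangleright\bar{\mathcal{R}}_3=\bar{\mathcal{R}}_1h^{(1)}\otimes\bar{\mathcal{R}}_2h^{(2)}\otimes\bar{\mathcal{R}}_3$ for $h\in\mathcal{H}$ and $\bar{\mathcal{R}}_{12}\,{}^{(2)}\!\bar{\mathcal{R}}_{13}\,\bar{\mathcal{R}}_{23}={}^{(1)}\!\bar{\mathcal{R}}_{23}\,\bar{\mathcal{R}}_{13}\,{}^{(3)}\!\bar{\mathcal{R}}_{12}$ in $\mathcal{U}^{\otimes3}\otimes\mathcal{L}$, where ${}^{(i)}\!\bar{\mathcal{R}}_{jk}$ denotes ${}^{(i)}\!\bar{\mathcal{R}}$. *)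

theory Defs
  imports "HOL-Library.Poly_Mapping"
begin

text \<open>A k-vector space with basis indexed by a type 'b is modelled as the type of
finitely supported coefficient functions 'b =>0 'k.  Tensor products of such spaces are
the spaces whose basis is the product of the bases (pairs nested to the right).
Multilinear maps are determined by their values on basis vectors.\<close>

definition smul :: "'k::field \<Rightarrow> ('b \<Rightarrow>\<^sub>0 'k) \<Rightarrow> ('b \<Rightarrow>\<^sub>0 'k)" where
  "smul c x = Poly_Mapping.map (\<lambda>v. c * v) x"

definition bv :: "'b \<Rightarrow> ('b \<Rightarrow>\<^sub>0 'k::field)" where
  "bv b = Poly_Mapping.single b 1"

definition lin :: "('a \<Rightarrow> ('b \<Rightarrow>\<^sub>0 'k::field)) \<Rightarrow> ('a \<Rightarrow>\<^sub>0 'k) \<Rightarrow> ('b \<Rightarrow>\<^sub>0 'k)" where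
  "lin f x = (\<Sum>a\<in>Poly_Mapping.keys x. smul (Poly_Mapping.lookup x a) (f a))"

definition linf :: "('a \<Rightarrow> 'k::field) \<Rightarrow> ('a \<Rightarrow>\<^sub>0 'k) \<Rightarrow> 'k" where
  "linf f x = (\<Sum>a\<in>Poly_Mapping.keys x. Poly_Mapping.lookup x a * f a)"

definition bilin :: "('a \<Rightarrow> 'b \<Rightarrow> ('c \<Rightarrow>\<^sub>0 'k::field)) \<Rightarrow> ('a \<Rightarrow>\<^sub>0 'k) \<Rightarrow> ('b \<Rightarrow>\<^sub>0 'k) \<Rightarrow> ('c \<Rightarrow>\<^sub>0 'k)" where
  "bilin f x y = (\<Sum>a\<in>Poly_Mapping.keys x. \<Sum>b\<in>Poly_Mapping.keys y. smul (Poly_Mapping.lookup x a * Poly_Mapping.lookup y b) (f a b))"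

definition tens :: "('a \<Rightarrow>\<^sub>0 'k::field) \<Rightarrow> ('b \<Rightarrow>\<^sub>0 'k) \<Rightarrow> ('a \<times> 'b \<Rightarrow>\<^sub>0 'k)" where
  "tens x y = bilin (\<lambda>a b. bv (a, b)) x y"

definition tmul :: "('a \<Rightarrow> 'a \<Rightarrow> ('a \<Rightarrow>\<^sub>0 'k::field)) \<Rightarrow> ('b \<Rightarrow> 'b \<Rightarrow> ('b \<Rightarrow>\<^sub>0 'k))
    \<Rightarrow> ('a \<times> 'b) \<Rightarrow> ('a \<times> 'b) \<Rightarrow> ('a \<times> 'b \<Rightarrow>\<^sub>0 'k)" where
  "tmul m1 m2 = (\<lambda>(a1, a2) (b1, b2). tens (m1 a1 b1) (m2 a2 b2))"

definition is_algebra :: "('a \<Rightarrow> 'a \<Rightarrow> ('a \<Rightarrow>\<^sub>0 'k::field)) \<Rightarrow> ('a \<Rightarrow>\<^sub>0 'k) \<Rightarrow> bool" where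
  "is_algebra m u \<longleftrightarrow>
     (\<forall>x y z. bilin m (bilin m x y) z = bilin m x (bilin m y z)) \<and>
     (\<forall>x. bilin m u x = x \<and> bilin m x u = x)"

definition invertible_in :: "('a \<Rightarrow> 'a \<Rightarrow> ('a \<Rightarrow>\<^sub>0 'k::field)) \<Rightarrow> ('a \<Rightarrow>\<^sub>0 'k) \<Rightarrow> ('a \<Rightarrow>\<^sub>0 'k) \<Rightarrow> bool" where
  "invertible_in m u x \<longleftrightarrow> (\<exists>y. bilin m x y = u \<and> bilin m y x = u)"

definition ainv :: "('a \<Rightarrow> 'a \<Rightarrow> ('a \<Rightarrow>\<^sub>0 'k::field)) \<Rightarrow> ('a \<Rightarrow>\<^sub>0 'k) \<Rightarrow> ('a \<Rightarrow>\<^sub>0 'k) \<Rightarrow> ('a \<Rightarrow>\<^sub>0 'k)" where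
  "ainv m u x = (THE y. bilin m x y = u \<and> bilin m y x = u)"

record (overloaded) ('u, 'k) hopf_alg =
  hmul :: "'u \<Rightarrow> 'u \<Rightarrow> ('u \<Rightarrow>\<^sub>0 'k)"
  hone :: "'u \<Rightarrow>\<^sub>0 'k"
  hcomul :: "'u \<Rightarrow> ('u \<times> 'u \<Rightarrow>\<^sub>0 'k)"
  hcounit :: "'u \<Rightarrow> 'k"
  hanti :: "'u \<Rightarrow> ('u \<Rightarrow>\<^sub>0 'k)"

definition hopf_algebra :: "('u, 'k::field) hopf_alg \<Rightarrow> bool" where
  "hopf_algebra A \<longleftrightarrow>
     is_algebra (hmul A) (hone A) \<and>
     (\<forall>a. lin (\<lambda>(x, y). lin (\<lambda>(p, q). bv (p, q, y)) (hcomul A x)) (hcomul A a)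
         = lin (\<lambda>(x, y). lin (\<lambda>(p, q). bv (x, p, q)) (hcomul A y)) (hcomul A a)) \<and>
     (\<forall>a. lin (\<lambda>(x, y). smul (hcounit A x) (bv y)) (hcomul A a) = bv a \<and>
          lin (\<lambda>(x, y). smul (hcounit A y) (bv x)) (hcomul A a) = bv a) \<and>
     (\<forall>a b. lin (hcomul A) (hmul A a b)
            = bilin (tmul (hmul A) (hmul A)) (hcomul A a) (hcomul A b)) \<and>
     lin (hcomul A) (hone A) = tens (hone A) (hone A) \<and>
     (\<forall>a b. linf (hcounit A) (hmul A a b) = hcounit A a * hcounit A b) \<and>
     linf (hcounit A) (hone A) = 1 \<and>
     (\<forall>a. lin (\<lambda>(x, y). bilin (hmul A) (hanti A x) (bv y)) (hcomul A a)
            = smul (hcounit A a) (hone A) \<and>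
          lin (\<lambda>(x, y). bilin (hmul A) (bv x) (hanti A y)) (hcomul A a)
            = smul (hcounit A a) (hone A))"

definition emb12 :: "('u, 'k::field) hopf_alg \<Rightarrow> ('u \<times> 'u \<Rightarrow>\<^sub>0 'k) \<Rightarrow> ('u \<times> 'u \<times> 'u \<Rightarrow>\<^sub>0 'k)" where
  "emb12 A R = lin (\<lambda>(x, y). lin (\<lambda>c. bv (x, y, c)) (hone A)) R"
definition emb13 :: "('u, 'k::field) hopf_alg \<Rightarrow> ('u \<times> 'u \<Rightarrow>\<^sub>0 'k) \<Rightarrow> ('u \<times> 'u \<times> 'u \<Rightarrow>\<^sub>0 'k)" where
  "emb13 A R = lin (\<lambda>(x, y). lin (\<lambda>c. bv (x, c, y)) (hone A)) R"
definition emb23 :: "('u, 'k::field) hopf_alg \<Rightarrow> ('u \<times> 'u \<Rightarrow>\<^sub>0 'k) \<Rightarrow> ('u \<times> 'u \<times> 'u \<Rightarrow>\<^sub>0 'k)" where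
  "emb23 A R = lin (\<lambda>(x, y). lin (\<lambda>c. bv (c, x, y)) (hone A)) R"

definition quasitriangular :: "('u, 'k::field) hopf_alg \<Rightarrow> ('u \<times> 'u \<Rightarrow>\<^sub>0 'k) \<Rightarrow> bool" where
  "quasitriangular A R \<longleftrightarrow>
     hopf_algebra A \<and>
     invertible_in (tmul (hmul A) (hmul A)) (tens (hone A) (hone A)) R \<and>
     (\<forall>a. bilin (tmul (hmul A) (hmul A)) R (hcomul A a)
          = bilin (tmul (hmul A) (hmul A)) (lin (\<lambda>(x, y). bv (y, x)) (hcomul A a)) R) \<and>
     lin (\<lambda>(x, y). lin (\<lambda>(p, q). bv (p, q, y)) (hcomul A x)) R
       = bilin (tmul (hmul A) (tmul (hmul A) (hmul A))) (emb13 A R) (emb23 A R) \<and>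
     lin (\<lambda>(x, y). lin (\<lambda>(p, q). bv (x, p, q)) (hcomul A y)) R
       = bilin (tmul (hmul A) (tmul (hmul A) (hmul A))) (emb13 A R) (emb12 A R)"

text \<open>Hopf subalgebra H of U.  The basis of U is chosen adapted to H (possible over a
field): H is the span of the basis vectors indexed by BH, i.e. the vectors with keys in BH.\<close>
definition hopf_subalgebra :: "('u, 'k::field) hopf_alg \<Rightarrow> 'u set \<Rightarrow> bool" where
  "hopf_subalgebra A BH \<longleftrightarrow>
     Poly_Mapping.keys (hone A) \<subseteq> BH \<and>
     (\<forall>a\<in>BH. \<forall>b\<in>BH. Poly_Mapping.keys (hmul A a b) \<subseteq> BH) \<and>
     (\<forall>a\<in>BH. Poly_Mapping.keys (hcomul A a) \<subseteq> BH \<times> BH) \<and>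
     (\<forall>a\<in>BH. Poly_Mapping.keys (hanti A a) \<subseteq> BH)"

definition subsp :: "'u set \<Rightarrow> ('u \<Rightarrow>\<^sub>0 'k::field) set" where
  "subsp BH = {x. Poly_Mapping.keys x \<subseteq> BH}"

record (overloaded) ('u, 'l, 'k) base_alg =
  lmul :: "'l \<Rightarrow> 'l \<Rightarrow> ('l \<Rightarrow>\<^sub>0 'k)"
  lone :: "'l \<Rightarrow>\<^sub>0 'k"
  lact :: "'u \<Rightarrow> 'l \<Rightarrow> ('l \<Rightarrow>\<^sub>0 'k)"
  lcoact :: "'l \<Rightarrow> ('u \<times> 'l \<Rightarrow>\<^sub>0 'k)"

text \<open>The action h |> l (only meaningful for h in H).\<close>
definition actx :: "('u, 'l, 'k::field) base_alg \<Rightarrow> ('u \<Rightarrow>\<^sub>0 'k) \<Rightarrow> ('l \<Rightarrow>\<^sub>0 'k) \<Rightarrow> ('l \<Rightarrow>\<^sub>0 'k)" where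
  "actx B h l = bilin (lact B) h l"

definition base_algebra :: "('u, 'k::field) hopf_alg \<Rightarrow> 'u set \<Rightarrow> ('u, 'l, 'k) base_alg \<Rightarrow> bool" where
  "base_algebra A BH B \<longleftrightarrow>
     is_algebra (lmul B) (lone B) \<and>
     \<comment> \<open>left H-module algebra\<close>
     (\<forall>l. actx B (hone A) l = l) \<and>
     (\<forall>a\<in>BH. \<forall>b\<in>BH. \<forall>l. actx B (hmul A a b) l = actx B (bv a) (actx B (bv b) l)) \<and>
     (\<forall>a\<in>BH. \<forall>l l'. actx B (bv a) (bilin (lmul B) l l')
        = lin (\<lambda>(x, y). bilin (lmul B) (actx B (bv x) l) (actx B (bv y) l')) (hcomul A a)) \<and>
     (\<forall>a\<in>BH. actx B (bv a) (lone B) = smul (hcounit A a) (lone B)) \<and>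
     \<comment> \<open>left H-comodule algebra\<close>
     (\<forall>l. Poly_Mapping.keys (lcoact B l) \<subseteq> BH \<times> UNIV) \<and>
     (\<forall>l. lin (\<lambda>(u, m). lin (\<lambda>(p, q). bv (p, q, m)) (hcomul A u)) (lcoact B l)
          = lin (\<lambda>(u, m). lin (\<lambda>(v, n). bv (u, v, n)) (lcoact B m)) (lcoact B l)) \<and>
     (\<forall>l. lin (\<lambda>(u, m). smul (hcounit A u) (bv m)) (lcoact B l) = bv l) \<and>
     (\<forall>l l'. lin (lcoact B) (lmul B l l')
          = bilin (tmul (hmul A) (lmul B)) (lcoact B l) (lcoact B l')) \<and>
     lin (lcoact B) (lone B) = tens (hone A) (lone B) \<and>
     \<comment> \<open>compatibility conditions\<close>
     (\<forall>a\<in>BH. \<forall>l.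
        lin (\<lambda>(x, y). bilin (tmul (hmul A) (lmul B))
               (lin (lcoact B) (actx B (bv x) (bv l))) (tens (bv y) (lone B))) (hcomul A a)
      = lin (\<lambda>(x, y). lin (\<lambda>(u, m). tens (hmul A x u) (actx B (bv y) (bv m))) (lcoact B l))
            (hcomul A a)) \<and>
     (\<forall>l1 l2. bilin (lmul B) (bv l1) l2
        = lin (\<lambda>(u, m). bilin (lmul B) (actx B (bv u) l2) (bv m)) (lcoact B l1))"

definition mul3 :: "('u, 'k::field) hopf_alg \<Rightarrow> ('u, 'l, 'k) base_alg
    \<Rightarrow> ('u \<times> 'u \<times> 'l) \<Rightarrow> ('u \<times> 'u \<times> 'l) \<Rightarrow> ('u \<times> 'u \<times> 'l \<Rightarrow>\<^sub>0 'k)" where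
  "mul3 A B = tmul (hmul A) (tmul (hmul A) (lmul B))"

definition one3 :: "('u, 'k::field) hopf_alg \<Rightarrow> ('u, 'l, 'k) base_alg \<Rightarrow> ('u \<times> 'u \<times> 'l \<Rightarrow>\<^sub>0 'k)" where
  "one3 A B = tens (hone A) (tens (hone A) (lone B))"

definition mul4 :: "('u, 'k::field) hopf_alg \<Rightarrow> ('u, 'l, 'k) base_alg
    \<Rightarrow> ('u \<times> 'u \<times> 'u \<times> 'l) \<Rightarrow> ('u \<times> 'u \<times> 'u \<times> 'l) \<Rightarrow> ('u \<times> 'u \<times> 'u \<times> 'l \<Rightarrow>\<^sub>0 'k)" where
  "mul4 A B = tmul (hmul A) (tmul (hmul A) (tmul (hmul A) (lmul B)))"

text \<open>R identified with R (x) 1 in U (x) U (x) L.\<close>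
definition Rlift :: "('u, 'l, 'k::field) base_alg \<Rightarrow> ('u \<times> 'u \<Rightarrow>\<^sub>0 'k) \<Rightarrow> ('u \<times> 'u \<times> 'l \<Rightarrow>\<^sub>0 'k)" where
  "Rlift B R = lin (\<lambda>(x, y). lin (\<lambda>c. bv (x, y, c)) (lone B)) R"

definition flip21 :: "('u \<times> 'u \<times> 'l \<Rightarrow>\<^sub>0 'k::field) \<Rightarrow> ('u \<times> 'u \<times> 'l \<Rightarrow>\<^sub>0 'k)" where
  "flip21 X = lin (\<lambda>(a, b, l). bv (b, a, l)) X"

definition X12 :: "('u, 'k::field) hopf_alg \<Rightarrow> ('u \<times> 'u \<times> 'l \<Rightarrow>\<^sub>0 'k) \<Rightarrow> ('u \<times> 'u \<times> 'u \<times> 'l \<Rightarrow>\<^sub>0 'k)" where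
  "X12 A X = lin (\<lambda>(a, b, l). lin (\<lambda>c. bv (a, b, c, l)) (hone A)) X"
definition X13 :: "('u, 'k::field) hopf_alg \<Rightarrow> ('u \<times> 'u \<times> 'l \<Rightarrow>\<^sub>0 'k) \<Rightarrow> ('u \<times> 'u \<times> 'u \<times> 'l \<Rightarrow>\<^sub>0 'k)" where
  "X13 A X = lin (\<lambda>(a, b, l). lin (\<lambda>c. bv (a, c, b, l)) (hone A)) X"
definition X23 :: "('u, 'k::field) hopf_alg \<Rightarrow> ('u \<times> 'u \<times> 'l \<Rightarrow>\<^sub>0 'k) \<Rightarrow> ('u \<times> 'u \<times> 'u \<times> 'l \<Rightarrow>\<^sub>0 'k)" where
  "X23 A X = lin (\<lambda>(a, b, l). lin (\<lambda>c. bv (c, a, b, l)) (hone A)) X"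

definition sh3 :: "('u, 'l, 'k::field) base_alg \<Rightarrow> ('u \<times> 'u \<times> 'l \<Rightarrow>\<^sub>0 'k) \<Rightarrow> ('u \<times> 'u \<times> 'u \<times> 'l \<Rightarrow>\<^sub>0 'k)" where
  "sh3 B X = lin (\<lambda>(a, b, l). lin (\<lambda>(u, m). bv (a, b, u, m)) (lcoact B l)) X"
definition sh2 :: "('u, 'l, 'k::field) base_alg \<Rightarrow> ('u \<times> 'u \<times> 'l \<Rightarrow>\<^sub>0 'k) \<Rightarrow> ('u \<times> 'u \<times> 'u \<times> 'l \<Rightarrow>\<^sub>0 'k)" where
  "sh2 B X = lin (\<lambda>(a, b, l). lin (\<lambda>(u, m). bv (a, u, b, m)) (lcoact B l)) X"
definition sh1 :: "('u, 'l, 'k::field) base_alg \<Rightarrow> ('u \<times> 'u \<times> 'l \<Rightarrow>\<^sub>0 'k) \<Rightarrow> ('u \<times> 'u \<times> 'u \<times> 'l \<Rightarrow>\<^sub>0 'k)" where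
  "sh1 B X = lin (\<lambda>(a, b, l). lin (\<lambda>(u, m). bv (u, a, b, m)) (lcoact B l)) X"

definition DeltaL :: "('u, 'k::field) hopf_alg \<Rightarrow> ('u \<times> 'u \<times> 'l \<Rightarrow>\<^sub>0 'k) \<Rightarrow> ('u \<times> 'u \<times> 'u \<times> 'l \<Rightarrow>\<^sub>0 'k)" where
  "DeltaL A X = lin (\<lambda>(a, b, l). lin (\<lambda>(p, q). bv (p, q, b, l)) (hcomul A a)) X"
definition DeltaR :: "('u, 'k::field) hopf_alg \<Rightarrow> ('u \<times> 'u \<times> 'l \<Rightarrow>\<^sub>0 'k) \<Rightarrow> ('u \<times> 'u \<times> 'u \<times> 'l \<Rightarrow>\<^sub>0 'k)" where
  "DeltaR A X = lin (\<lambda>(a, b, l). lin (\<lambda>(p, q). bv (a, p, q, l)) (hcomul A b)) X"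

definition Delta2 :: "('u, 'k::field) hopf_alg \<Rightarrow> ('u \<Rightarrow>\<^sub>0 'k) \<Rightarrow> ('u \<times> 'u \<times> 'u \<Rightarrow>\<^sub>0 'k)" where
  "Delta2 A h = lin (\<lambda>(a, r). tens (bv a) (hcomul A r)) (lin (hcomul A) h)"
definition Delta_one :: "('u, 'k::field) hopf_alg \<Rightarrow> ('u, 'l, 'k) base_alg \<Rightarrow> ('u \<Rightarrow>\<^sub>0 'k) \<Rightarrow> ('u \<times> 'u \<times> 'l \<Rightarrow>\<^sub>0 'k)" where
  "Delta_one A B h = lin (\<lambda>(a, b). tens (bv a) (tens (bv b) (lone B))) (lin (hcomul A) h)"

definition dyn_twist :: "('u, 'k::field) hopf_alg \<Rightarrow> 'u set \<Rightarrow> ('u, 'l, 'k) base_alg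
    \<Rightarrow> ('u \<times> 'u \<times> 'l \<Rightarrow>\<^sub>0 'k) \<Rightarrow> bool" where
  "dyn_twist A BH B F \<longleftrightarrow>
     invertible_in (mul3 A B) (one3 A B) F \<and>
     (\<forall>h\<in>subsp BH.
        lin (\<lambda>(a, b, c). lin (\<lambda>(f1, f2, f3).
               tens (bilin (hmul A) (bv a) (bv f1))
                 (tens (bilin (hmul A) (bv b) (bv f2)) (actx B (bv c) (bv f3)))) F) (Delta2 A h)
        = bilin (mul3 A B) F (Delta_one A B h)) \<and>
     bilin (mul4 A B) (DeltaL A F) (sh3 B F) = bilin (mul4 A B) (DeltaR A F) (X23 A F) \<and>
     lin (\<lambda>(a, b, l). smul (hcounit A a) (tens (bv b) (bv l))) F = tens (hone A) (lone B) \<and>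
     lin (\<lambda>(a, b, l). smul (hcounit A b) (tens (bv a) (bv l))) F = tens (hone A) (lone B)"

definition dyn_R_matrix :: "('u, 'k::field) hopf_alg \<Rightarrow> 'u set \<Rightarrow> ('u, 'l, 'k) base_alg
    \<Rightarrow> ('u \<times> 'u \<times> 'l \<Rightarrow>\<^sub>0 'k) \<Rightarrow> bool" where
  "dyn_R_matrix A BH B Rb \<longleftrightarrow>
     (\<forall>h\<in>subsp BH.
        lin (\<lambda>(a, b, c). lin (\<lambda>(f1, f2, f3).
               tens (bilin (hmul A) (bv b) (bv f1))
                 (tens (bilin (hmul A) (bv a) (bv f2)) (actx B (bv c) (bv f3)))) Rb) (Delta2 A h)
        = bilin (mul3 A B) Rb (Delta_one A B h)) \<and>
     bilin (mul4 A B) (bilin (mul4 A B) (X12 A Rb) (sh2 B Rb)) (X23 A Rb)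
       = bilin (mul4 A B) (bilin (mul4 A B) (sh1 B Rb) (X13 A Rb)) (sh3 B Rb)"

end

theory Submission
  imports Defs
begin

lemma lookup_smul[simp]: "Poly_Mapping.lookup (smul c x) a = c * Poly_Mapping.lookup x a"
  unfolding smul_def by (simp add: Poly_Mapping.map.rep_eq when_def)

lemma lookup_bv: "Poly_Mapping.lookup (bv b) a = (if b = a then (1::'k::field) else 0)"
  unfolding bv_def by (simp add: lookup_single when_def)

lemma keys_bv[simp]: "Poly_Mapping.keys (bv b :: 'b \<Rightarrow>\<^sub>0 'k::field) = {b}"
  unfolding bv_def by simp

lemma smul_add_left: "smul (c + d) v = smul c v + smul d v"
  by (rule poly_mapping_eqI) (simp add: lookup_add algebra_simps)
lemma smul_add_right: "smul c (v + w) = smul c v + smul c w"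
  by (rule poly_mapping_eqI) (simp add: lookup_add algebra_simps)
lemma smul_smul[simp]: "smul c (smul d v) = smul (c * d) v"
  by (rule poly_mapping_eqI) (simp add: algebra_simps)
lemma smul_zero_left[simp]: "smul 0 v = 0"
  by (rule poly_mapping_eqI) simp
lemma smul_zero_right[simp]: "smul c 0 = 0"
  by (rule poly_mapping_eqI) simp
lemma smul_one[simp]: "smul 1 v = v"
  by (rule poly_mapping_eqI) simp
lemma smul_sum: "smul c (sum f S) = (\<Sum>a\<in>S. smul c (f a))"
  by (rule poly_mapping_eqI) (simp add: lookup_sum sum_distrib_left)
lemma sum_smul: "smul (sum f S) v = (\<Sum>a\<in>S. smul (f a) v)"
  by (rule poly_mapping_eqI) (simp add: lookup_sum sum_distrib_right)
lemma keys_smul: "Poly_Mapping.keys (smul c x) \<subseteq> Poly_Mapping.keys x"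
  by (auto simp: in_keys_iff)

lemma lin_alt:
  assumes "finite S" "Poly_Mapping.keys x \<subseteq> S"
  shows "lin f x = (\<Sum>a\<in>S. smul (Poly_Mapping.lookup x a) (f a))"
  unfolding lin_def
  by (rule sum.mono_neutral_left) (use assms in \<open>auto simp: in_keys_iff\<close>)

lemma lin_add: "lin f (x + y) = lin f x + lin f y"
proof -
  let ?S = "Poly_Mapping.keys x \<union> Poly_Mapping.keys y"
  have "Poly_Mapping.keys (x + y) \<subseteq> ?S" by (rule keys_add)
  then have "lin f (x + y) = (\<Sum>a\<in>?S. smul (Poly_Mapping.lookup (x+y) a) (f a))"
    by (intro lin_alt) auto
  also have "\<dots> = (\<Sum>a\<in>?S. smul (Poly_Mapping.lookup x a) (f a)) + (\<Sum>a\<in>?S. smul (Poly_Mapping.lookup y a) (f a))"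
    by (simp add: lookup_add smul_add_left sum.distrib)
  also have "\<dots> = lin f x + lin f y"
    by (subst (1 2) lin_alt[where S="?S"]) auto
  finally show ?thesis .
qed

lemma lin_smul: "lin f (smul c x) = smul c (lin f x)"
proof -
  have "lin f (smul c x) = (\<Sum>a\<in>Poly_Mapping.keys x. smul (Poly_Mapping.lookup (smul c x) a) (f a))"
    by (intro lin_alt) (auto simp: keys_smul)
  then show ?thesis by (simp add: lin_def smul_sum)
qed

lemma lin_zero[simp]: "lin f 0 = 0"
  by (simp add: lin_def)

lemma lin_bv[simp]: "lin f (bv a) = f a"
  by (simp add: lin_def lookup_bv)

lemma lin_expand: "lin bv x = x"
proof (rule poly_mapping_eqI)
  fix b
  have "Poly_Mapping.lookup (lin bv x) b = (\<Sum>a\<in>Poly_Mapping.keys x. Poly_Mapping.lookup x a * (if a = b then 1 else 0))"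
    by (simp add: lin_def lookup_sum lookup_bv)
  also have "\<dots> = Poly_Mapping.lookup x b"
    by (cases "b \<in> Poly_Mapping.keys x") (auto simp: in_keys_iff if_distrib cong: if_cong)
  finally show "Poly_Mapping.lookup (lin bv x) b = Poly_Mapping.lookup x b" .
qed

definition lm :: "(('a \<Rightarrow>\<^sub>0 'k::field) \<Rightarrow> ('b \<Rightarrow>\<^sub>0 'k)) \<Rightarrow> bool" where
  "lm \<phi> \<longleftrightarrow> (\<forall>x y. \<phi> (x + y) = \<phi> x + \<phi> y) \<and> (\<forall>c x. \<phi> (smul c x) = smul c (\<phi> x))"

lemma lm_add: "lm \<phi> \<Longrightarrow> \<phi> (x + y) = \<phi> x + \<phi> y" by (simp add: lm_def)
lemma lm_smul: "lm \<phi> \<Longrightarrow> \<phi> (smul c x) = smul c (\<phi> x)" by (simp add: lm_def)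
lemma lm_zero: "lm \<phi> \<Longrightarrow> \<phi> 0 = 0"
  using lm_smul[of \<phi> 0 0] by simp
lemma lm_sum: "lm \<phi> \<Longrightarrow> \<phi> (sum f S) = (\<Sum>a\<in>S. \<phi> (f a))"
  by (induction S rule: infinite_finite_induct) (auto simp: lm_zero lm_add)

lemma lm_expand: assumes "lm \<phi>" shows "\<phi> x = lin (\<lambda>a. \<phi> (bv a)) x"
proof -
  have "\<phi> x = \<phi> (lin bv x)" by (simp add: lin_expand)
  also have "\<dots> = lin (\<lambda>a. \<phi> (bv a)) x"
    unfolding lin_def by (simp add: lm_sum[OF assms] lm_smul[OF assms])
  finally show ?thesis .
qed

lemma lm_ext: assumes "lm \<phi>" "lm \<psi>" "\<And>a. \<phi> (bv a) = \<psi> (bv a)" shows "\<phi> x = \<psi> x"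
proof -
  have "\<phi> x = lin (\<lambda>a. \<phi> (bv a)) x" by (rule lm_expand[OF assms(1)])
  also have "\<dots> = lin (\<lambda>a. \<psi> (bv a)) x" using assms(3) by simp
  also have "\<dots> = \<psi> x" by (rule lm_expand[OF assms(2), symmetric])
  finally show ?thesis .
qed

lemma lm_lin[intro]: "lm \<phi> \<Longrightarrow> lm (\<lambda>x. lin f (\<phi> x))"
  by (simp add: lm_def lin_add lin_smul)
lemma lm_id[intro]: "lm (\<lambda>x. x)"
  by (simp add: lm_def)
lemma lm_lin0[intro]: "lm (lin f)"
  unfolding lm_def by (simp add: lin_add lin_smul)

lemma lin_lin: "lin g (lin f x) = lin (\<lambda>a. lin g (f a)) x"
  by (rule lm_ext[where \<phi>="\<lambda>x. lin g (lin f x)"]) auto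

lemma lin_cong: "(\<And>a. a \<in> Poly_Mapping.keys x \<Longrightarrow> f a = g a) \<Longrightarrow> lin f x = lin g x"
  by (simp add: lin_def)

lemma bilin_lin: "bilin m x y = lin (\<lambda>a. lin (m a) y) x"
  unfolding bilin_def lin_def by (simp add: smul_sum mult.commute)

lemma lin_swap: "lin (\<lambda>a. lin (\<lambda>b. h a b) y) x = lin (\<lambda>b. lin (\<lambda>a. h a b) x) y"
  unfolding lin_def smul_sum smul_smul by (subst sum.swap) (simp add: mult.commute)

lemma lin_plus_fun: "lin (\<lambda>a. f a + g a) x = lin f x + lin g x"
  unfolding lin_def by (simp add: smul_add_right sum.distrib)
lemma lin_smul_fun: "lin (\<lambda>a. smul c (f a)) x = smul c (lin f x)"
  unfolding lin_def by (simp add: smul_sum mult.commute)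
lemma lin_zero_fun[simp]: "lin (\<lambda>a. 0) x = 0"
  unfolding lin_def by simp

lemma lm_lin_fun[intro]: "(\<And>a. lm (\<lambda>y. f a y)) \<Longrightarrow> lm (\<lambda>y. lin (\<lambda>a. f a y) x)"
  unfolding lm_def by (simp add: lin_plus_fun lin_smul_fun)

lemma lm_bilin1[intro]: "lm \<phi> \<Longrightarrow> lm (\<lambda>x. bilin m (\<phi> x) y)"
  unfolding bilin_lin by auto
lemma lm_bilin2[intro]: "lm \<phi> \<Longrightarrow> lm (\<lambda>x. bilin m y (\<phi> x))"
  unfolding bilin_lin by (intro lm_lin_fun lm_lin)

lemma bilin_bv[simp]: "bilin m (bv a) (bv b) = m a b"
  by (simp add: bilin_lin)

lemma tens_lin: "tens x y = lin (\<lambda>a. lin (\<lambda>b. bv (a, b)) y) x"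
  by (simp add: tens_def bilin_lin)
lemma lm_tens1[intro]: "lm \<phi> \<Longrightarrow> lm (\<lambda>x. tens (\<phi> x) y)"
  unfolding tens_def by auto
lemma lm_tens2[intro]: "lm \<phi> \<Longrightarrow> lm (\<lambda>x. tens y (\<phi> x))"
  unfolding tens_def by auto
lemma tens_bv[simp]: "tens (bv a) (bv b) = bv (a, b)"
  by (simp add: tens_def)

lemmas lm_rules = lm_bilin1 lm_bilin2 lm_tens1 lm_tens2 lm_id lm_lin lm_lin0

lemma lm_ext2:
  assumes "\<And>y. lm (\<lambda>x. \<phi> x y)" "\<And>x. lm (\<lambda>y. \<phi> x y)"
    "\<And>y. lm (\<lambda>x. \<psi> x y)" "\<And>x. lm (\<lambda>y. \<psi> x y)"
    "\<And>a b. \<phi> (bv a) (bv b) = \<psi> (bv a) (bv b)"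
  shows "\<phi> x y = \<psi> x y"
proof -
  have h: "\<And>a. \<phi> (bv a) y = \<psi> (bv a) y"
    by (rule lm_ext[where \<phi>="\<lambda>y. \<phi> (bv _) y"]) (use assms in auto)
  show ?thesis by (rule lm_ext[where \<phi>="\<lambda>x. \<phi> x y" and \<psi>="\<lambda>x. \<psi> x y"]) (use assms h in auto)
qed

lemma lm_ext3:
  assumes "\<And>y z. lm (\<lambda>x. \<phi> x y z)" "\<And>x z. lm (\<lambda>y. \<phi> x y z)" "\<And>x y. lm (\<lambda>z. \<phi> x y z)"
    "\<And>y z. lm (\<lambda>x. \<psi> x y z)" "\<And>x z. lm (\<lambda>y. \<psi> x y z)" "\<And>x y. lm (\<lambda>z. \<psi> x y z)"
    "\<And>a b c. \<phi> (bv a) (bv b) (bv c) = \<psi> (bv a) (bv b) (bv c)"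
  shows "\<phi> x y z = \<psi> x y z"
proof -
  have h: "\<And>a. \<phi> (bv a) y z = \<psi> (bv a) y z"
    by (rule lm_ext2[where \<phi>="\<lambda>y z. \<phi> (bv _) y z"]) (use assms in auto)
  show ?thesis by (rule lm_ext[where \<phi>="\<lambda>x. \<phi> x y z" and \<psi>="\<lambda>x. \<psi> x y z"]) (use assms h in auto)
qed

lemma lm_ext4:
  assumes "\<And>y z w. lm (\<lambda>x. \<phi> x y z w)" "\<And>x z w. lm (\<lambda>y. \<phi> x y z w)" "\<And>x y w. lm (\<lambda>z. \<phi> x y z w)"
    "\<And>x y z. lm (\<lambda>w. \<phi> x y z w)"
    "\<And>y z w. lm (\<lambda>x. \<psi> x y z w)" "\<And>x z w. lm (\<lambda>y. \<psi> x y z w)" "\<And>x y w. lm (\<lambda>z. \<psi> x y z w)"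
    "\<And>x y z. lm (\<lambda>w. \<psi> x y z w)"
    "\<And>a b c d. \<phi> (bv a) (bv b) (bv c) (bv d) = \<psi> (bv a) (bv b) (bv c) (bv d)"
  shows "\<phi> x y z w = \<psi> x y z w"
proof -
  have h: "\<And>a. \<phi> (bv a) y z w = \<psi> (bv a) y z w"
    by (rule lm_ext3[where \<phi>="\<lambda>y z w. \<phi> (bv _) y z w"]) (use assms in auto)
  show ?thesis by (rule lm_ext[where \<phi>="\<lambda>x. \<phi> x y z w" and \<psi>="\<lambda>x. \<psi> x y z w"]) (use assms h in auto)
qed

lemma bilin_tmul_tens:
  "bilin (tmul m1 m2) (tens x1 x2) (tens y1 y2) = tens (bilin m1 x1 y1) (bilin m2 x2 y2)"
  by (rule lm_ext4[where \<phi>="\<lambda>x1 x2 y1 y2. bilin (tmul m1 m2) (tens x1 x2) (tens y1 y2)"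
        and \<psi>="\<lambda>x1 x2 y1 y2. tens (bilin m1 x1 y1) (bilin m2 x2 y2)"])
     ((rule lm_rules)+ | simp add: tmul_def)+

lemma bv_pair: "bv (a, b) = tens (bv a) (bv b)" by simp

lemma is_algebra_tmul:
  fixes m1 :: "'a \<Rightarrow> 'a \<Rightarrow> ('a \<Rightarrow>\<^sub>0 'k::field)" and m2 :: "'b \<Rightarrow> 'b \<Rightarrow> ('b \<Rightarrow>\<^sub>0 'k)"
  assumes "is_algebra m1 u1" "is_algebra m2 u2"
  shows "is_algebra (tmul m1 m2) (tens u1 u2)"
  unfolding is_algebra_def
proof (intro conjI allI)
  fix x y z
  show "bilin (tmul m1 m2) (bilin (tmul m1 m2) x y) z = bilin (tmul m1 m2) x (bilin (tmul m1 m2) y z)"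
  proof (rule lm_ext3[where \<phi>="\<lambda>x y z. bilin (tmul m1 m2) (bilin (tmul m1 m2) x y) z"
        and \<psi>="\<lambda>x y z. bilin (tmul m1 m2) x (bilin (tmul m1 m2) y z)"])
    fix a b c :: "'a \<times> 'b"
    obtain a1 a2 b1 b2 c1 c2 where "a = (a1, a2)" "b = (b1, b2)" "c = (c1, c2)" by (cases a, cases b, cases c) auto
    then show "bilin (tmul m1 m2) (bilin (tmul m1 m2) (bv a) (bv b)) (bv c) =
               bilin (tmul m1 m2) (bv a) (bilin (tmul m1 m2) (bv b) (bv c))"
      using assms unfolding is_algebra_def by (simp only: bv_pair bilin_tmul_tens)
  qed ((rule lm_rules)+)
next
  fix x
  show "bilin (tmul m1 m2) (tens u1 u2) x = x"
  proof (rule lm_ext[where \<phi>="\<lambda>x. bilin (tmul m1 m2) (tens u1 u2) x" and \<psi>="\<lambda>x. x"])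
    fix a :: "'a \<times> 'b"
    obtain a1 a2 where "a = (a1, a2)" by (cases a) auto
    then show "bilin (tmul m1 m2) (tens u1 u2) (bv a) = bv a"
      using assms unfolding is_algebra_def by (simp only: bv_pair bilin_tmul_tens)
  qed ((rule lm_rules)+)
  show "bilin (tmul m1 m2) x (tens u1 u2) = x"
  proof (rule lm_ext[where \<phi>="\<lambda>x. bilin (tmul m1 m2) x (tens u1 u2)" and \<psi>="\<lambda>x. x"])
    fix a :: "'a \<times> 'b"
    obtain a1 a2 where "a = (a1, a2)" by (cases a) auto
    then show "bilin (tmul m1 m2) (bv a) (tens u1 u2) = bv a"
      using assms unfolding is_algebra_def by (simp only: bv_pair bilin_tmul_tens)
  qed ((rule lm_rules)+)
qed

locale alg =
  fixes m :: "'a \<Rightarrow> 'a \<Rightarrow> ('a \<Rightarrow>\<^sub>0 'k::field)" and u :: "'a \<Rightarrow>\<^sub>0 'k"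
  assumes is_alg: "is_algebra m u"
begin

abbreviation mm (infixl "\<bullet>" 70) where "x \<bullet> y \<equiv> bilin m x y"

lemma assoc: "(x \<bullet> y) \<bullet> z = x \<bullet> (y \<bullet> z)"
  using is_alg unfolding is_algebra_def by blast
lemma unit_l[simp]: "u \<bullet> x = x"
  using is_alg unfolding is_algebra_def by blast
lemma unit_r[simp]: "x \<bullet> u = x"
  using is_alg unfolding is_algebra_def by blast

lemma inv_unique:
  assumes "x \<bullet> y = u" "y \<bullet> x = u" "x \<bullet> z = u" "z \<bullet> x = u"
  shows "y = z"
proof -
  have "y = y \<bullet> (x \<bullet> z)" using assms by simp
  also have "\<dots> = (y \<bullet> x) \<bullet> z" by (simp add: assoc)
  finally show ?thesis using assms by simp
qed

lemma ainv:
  assumes "invertible_in m u x"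
  shows "x \<bullet> ainv m u x = u" "ainv m u x \<bullet> x = u"
proof -
  obtain y where y: "x \<bullet> y = u" "y \<bullet> x = u" using assms unfolding invertible_in_def by blast
  have "ainv m u x = y" unfolding ainv_def
    by (rule the_equality) (use y inv_unique in blast)+
  then show "x \<bullet> ainv m u x = u" "ainv m u x \<bullet> x = u" using y by auto
qed

lemma ainv_eq:
  assumes "x \<bullet> y = u" "y \<bullet> x = u"
  shows "ainv m u x = y"
  using ainv[of x] assms inv_unique unfolding invertible_in_def by blast

lemma cancel_l:
  assumes "invertible_in m u x" "x \<bullet> y = x \<bullet> z"
  shows "y = z"
proof -
  have "y = (ainv m u x \<bullet> x) \<bullet> y" using ainv[OF assms(1)] by simp
  also have "\<dots> = ainv m u x \<bullet> (x \<bullet> z)" by (simp add: assoc assms(2))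
  also have "\<dots> = z" using ainv[OF assms(1)] by (simp add: assoc[symmetric])
  finally show ?thesis .
qed

lemma invertible_mult:
  assumes "invertible_in m u x" "invertible_in m u y"
  shows "invertible_in m u (x \<bullet> y)"
proof -
  let ?z = "ainv m u y \<bullet> ainv m u x"
  have "(x \<bullet> y) \<bullet> ?z = u"
    using ainv[OF assms(1)] ainv[OF assms(2)] by (simp add: assoc[symmetric]) (simp add: assoc)
  moreover have "?z \<bullet> (x \<bullet> y) = u"
    using ainv[OF assms(1)] ainv[OF assms(2)] by (simp add: assoc[symmetric]) (simp add: assoc)
  ultimately show ?thesis unfolding invertible_in_def by blast
qed

end

lemma hom_invertible:
  assumes "alg m u" "alg m' u'"
    and mult: "\<And>x y. h (bilin m x y) = bilin m' (h x) (h y)" and unit: "h u = u'"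
    and inv: "invertible_in m u x"
  shows "invertible_in m' u' (h x)" "h (ainv m u x) = ainv m' u' (h x)"
proof -
  interpret a: alg m u by fact
  interpret b: alg m' u' by fact
  have 1: "bilin m' (h x) (h (ainv m u x)) = u'" "bilin m' (h (ainv m u x)) (h x) = u'"
    using a.ainv[OF inv] by (simp_all add: mult[symmetric] unit)
  then show "invertible_in m' u' (h x)" unfolding invertible_in_def by blast
  show "h (ainv m u x) = ainv m' u' (h x)"
    using b.ainv_eq[OF 1] by simp
qed

lemma bv3: "bv (a, b, c) = tens (bv a) (tens (bv b) (bv c))" by simp
lemma bv4: "bv (a, b, c, d) = tens (bv a) (tens (bv b) (tens (bv c) (bv d)))" by simp

definition P12 :: "('u \<times> 'u \<times> 'u \<times> 'l \<Rightarrow>\<^sub>0 'k::field) \<Rightarrow> ('u \<times> 'u \<times> 'u \<times> 'l \<Rightarrow>\<^sub>0 'k)" where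
  "P12 X = lin (\<lambda>(a, b, c, l). bv (b, a, c, l)) X"
definition P23 :: "('u \<times> 'u \<times> 'u \<times> 'l \<Rightarrow>\<^sub>0 'k::field) \<Rightarrow> ('u \<times> 'u \<times> 'u \<times> 'l \<Rightarrow>\<^sub>0 'k)" where
  "P23 X = lin (\<lambda>(a, b, c, l). bv (a, c, b, l)) X"

lemma lm_defs[intro]:
  "lm (X23 A)" "lm (X12 A)" "lm (X13 A)" "lm (flip21)" "lm P12" "lm P23"
  "lm (sh3 B)" "lm (sh2 B)" "lm (sh1 B)" "lm (DeltaL A)" "lm (DeltaR A)" "lm (Rlift B)"
  "lm (emb12 A)" "lm (emb13 A)" "lm (emb23 A)"
  unfolding X23_def X12_def X13_def flip21_def P12_def P23_def sh3_def sh2_def sh1_def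
    DeltaL_def DeltaR_def Rlift_def emb12_def emb13_def emb23_def
  by (rule lm_lin0)+

lemma lm_comp[intro]: "lm f \<Longrightarrow> lm g \<Longrightarrow> lm (\<lambda>x. f (g x))"
  unfolding lm_def by simp

lemmas lmr = lm_rules lm_comp[OF lm_defs(1)] lm_comp[OF lm_defs(2)] lm_comp[OF lm_defs(3)]
  lm_comp[OF lm_defs(4)] lm_comp[OF lm_defs(5)] lm_comp[OF lm_defs(6)] lm_comp[OF lm_defs(7)]
  lm_comp[OF lm_defs(8)] lm_comp[OF lm_defs(9)] lm_comp[OF lm_defs(10)] lm_comp[OF lm_defs(11)]
  lm_comp[OF lm_defs(12)] lm_comp[OF lm_defs(13)] lm_comp[OF lm_defs(14)] lm_comp[OF lm_defs(15)]

lemma X23_t3: "X23 A (tens x (tens y z)) = tens (hone A) (tens x (tens y z))"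
  by (rule lm_ext3[where \<phi>="\<lambda>x y z. X23 A (tens x (tens y z))"])
     ((rule lmr)+ | simp add: X23_def tens_lin lin_lin)+

lemma X12_t3: "X12 A (tens x (tens y z)) = tens x (tens y (tens (hone A) z))"
  by (rule lm_ext3[where \<phi>="\<lambda>x y z. X12 A (tens x (tens y z))"])
     ((rule lmr)+ | simp add: X12_def tens_lin lin_lin)+

lemma X13_t3: "X13 A (tens x (tens y z)) = tens x (tens (hone A) (tens y z))"
  by (rule lm_ext3[where \<phi>="\<lambda>x y z. X13 A (tens x (tens y z))"])
     ((rule lmr)+ | simp add: X13_def tens_lin lin_lin)+

lemma flip21_t3: "flip21 (tens x (tens y z)) = tens y (tens x z)"
  by (rule lm_ext3[where \<phi>="\<lambda>x y z. flip21 (tens x (tens y z))"])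
     ((rule lmr)+ | simp add: flip21_def tens_lin lin_lin)+

lemma P12_t4: "P12 (tens x (tens y (tens z w))) = tens y (tens x (tens z w))"
  by (rule lm_ext4[where \<phi>="\<lambda>x y z w. P12 (tens x (tens y (tens z w)))"])
     ((rule lmr)+ | simp add: P12_def tens_lin lin_lin)+

lemma P23_t4: "P23 (tens x (tens y (tens z w))) = tens x (tens z (tens y w))"
  by (rule lm_ext4[where \<phi>="\<lambda>x y z w. P23 (tens x (tens y (tens z w)))"])
     ((rule lmr)+ | simp add: P23_def tens_lin lin_lin)+

lemma sh3_t3: "sh3 B (tens x (tens y z)) = tens x (tens y (lin (lcoact B) z))"
  by (rule lm_ext3[where \<phi>="\<lambda>x y z. sh3 B (tens x (tens y z))"])
     ((rule lmr)+ | simp add: sh3_def tens_lin lin_lin split_def)+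

lemma sh2_P23: "sh2 B X = P23 (sh3 B X)"
  by (rule lm_ext[where \<phi>="sh2 B"])
     ((rule lmr)+ | simp add: sh2_def sh3_def P23_def lin_lin split_def)+

lemma sh1_P12: "sh1 B X = P12 (P23 (sh3 B X))"
  by (rule lm_ext[where \<phi>="sh1 B"])
     ((rule lmr)+ | simp add: sh1_def sh3_def P23_def P12_def lin_lin split_def)+

lemma Rlift_t3: "Rlift B (tens x y) = tens x (tens y (lone B))"
  by (rule lm_ext2[where \<phi>="\<lambda>x y. Rlift B (tens x y)"])
     ((rule lmr)+ | simp add: Rlift_def tens_lin lin_lin)+

lemma emb13_t: "emb13 A (tens x y) = tens x (tens (hone A) y)"
  by (rule lm_ext2[where \<phi>="\<lambda>x y. emb13 A (tens x y)"])
     ((rule lmr)+ | simp add: emb13_def tens_lin lin_lin)+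

lemma emb23_t: "emb23 A (tens x y) = tens (hone A) (tens x y)"
  by (rule lm_ext2[where \<phi>="\<lambda>x y. emb23 A (tens x y)"])
     ((rule lmr)+ | simp add: emb23_def tens_lin lin_lin)+

lemma emb12_t: "emb12 A (tens x y) = tens x (tens y (hone A))"
  by (rule lm_ext2[where \<phi>="\<lambda>x y. emb12 A (tens x y)"])
     ((rule lmr)+ | simp add: emb12_def tens_lin lin_lin)+

locale setting =
  fixes A :: "('u, 'k::field_char_0) hopf_alg"
    and R :: "'u \<times> 'u \<Rightarrow>\<^sub>0 'k"
    and BH :: "'u set"
    and B :: "('u, 'l, 'k) base_alg"
    and F :: "'u \<times> 'u \<times> 'l \<Rightarrow>\<^sub>0 'k"
  assumes qt: "quasitriangular A R"
    and hs: "hopf_subalgebra A BH"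
    and ba: "base_algebra A BH B"
    and dt: "dyn_twist A BH B F"
begin

abbreviation "U1 \<equiv> hone A"
abbreviation "L1 \<equiv> lone B"
abbreviation um (infixl "\<cdot>" 70) where "x \<cdot> y \<equiv> bilin (hmul A) x y"
abbreviation lmu (infixl "\<bullet>" 70) where "x \<bullet> y \<equiv> bilin (lmul B) x y"
abbreviation m2 (infixl "\<star>" 70) where "x \<star> y \<equiv> bilin (tmul (hmul A) (hmul A)) x y"
abbreviation m3 (infixl "\<diamond>" 70) where "x \<diamond> y \<equiv> bilin (mul3 A B) x y"
abbreviation m4 (infixl "\<odot>" 70) where "x \<odot> y \<equiv> bilin (mul4 A B) x y"
abbreviation "one4 \<equiv> tens U1 (tens U1 (tens U1 L1))"
abbreviation "Cm x \<equiv> lin (hcomul A) x"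
abbreviation "flip2 v \<equiv> lin (\<lambda>(x, y). bv (y, x)) v"

lemma hopfA: "hopf_algebra A" using qt unfolding quasitriangular_def by blast
lemma algU: "is_algebra (hmul A) U1" using hopfA unfolding hopf_algebra_def by blast
lemma algL: "is_algebra (lmul B) L1" using ba unfolding base_algebra_def by blast

lemma U1_mult[simp]: "U1 \<cdot> x = x" "x \<cdot> U1 = x" using algU unfolding is_algebra_def by blast+
lemma L1_mult[simp]: "L1 \<bullet> x = x" "x \<bullet> L1 = x" using algL unfolding is_algebra_def by blast+

lemma alg3: "alg (mul3 A B) (one3 A B)"
  unfolding alg_def mul3_def one3_def by (intro is_algebra_tmul algU algL)
lemma alg4: "alg (mul4 A B) one4"
  unfolding alg_def mul4_def by (intro is_algebra_tmul algU algL)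
lemma alg2: "alg (tmul (hmul A) (hmul A)) (tens U1 U1)"
  unfolding alg_def by (intro is_algebra_tmul algU)

sublocale a3: alg "mul3 A B" "one3 A B" by (rule alg3)
sublocale a4: alg "mul4 A B" one4 by (rule alg4)

lemma M3: "tens x1 (tens x2 x3) \<diamond> tens y1 (tens y2 y3) = tens (x1 \<cdot> y1) (tens (x2 \<cdot> y2) (x3 \<bullet> y3))"
  unfolding mul3_def by (simp add: bilin_tmul_tens)

lemma M4': "tens x1 (tens x2 v) \<odot> tens y1 (tens y2 w)
   = tens (x1 \<cdot> y1) (tens (x2 \<cdot> y2) (bilin (tmul (hmul A) (lmul B)) v w))"
  unfolding mul4_def by (simp add: bilin_tmul_tens)

lemma M4: "tens x1 (tens x2 (tens x3 x4)) \<odot> tens y1 (tens y2 (tens y3 y4))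
   = tens (x1 \<cdot> y1) (tens (x2 \<cdot> y2) (tens (x3 \<cdot> y3) (x4 \<bullet> y4)))"
  unfolding M4' by (simp add: bilin_tmul_tens)

lemma M2: "tens x1 x2 \<star> tens y1 y2 = tens (x1 \<cdot> y1) (x2 \<cdot> y2)"
  by (simp add: bilin_tmul_tens)

lemma X23_mult: "X23 A (x \<diamond> y) = X23 A x \<odot> X23 A y"
proof (rule lm_ext2[where \<phi>="\<lambda>x y. X23 A (x \<diamond> y)"])
  fix a b :: "'u \<times> 'u \<times> 'l"
  show "X23 A (bv a \<diamond> bv b) = X23 A (bv a) \<odot> X23 A (bv b)"
    by (cases a, cases b) (simp only: bv3 M3 M4 X23_t3 U1_mult)
qed ((rule lmr)+)

lemma X12_mult: "X12 A (x \<diamond> y) = X12 A x \<odot> X12 A y"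
proof (rule lm_ext2[where \<phi>="\<lambda>x y. X12 A (x \<diamond> y)"])
  fix a b :: "'u \<times> 'u \<times> 'l"
  show "X12 A (bv a \<diamond> bv b) = X12 A (bv a) \<odot> X12 A (bv b)"
    by (cases a, cases b) (simp only: bv3 M3 M4 X12_t3 U1_mult)
qed ((rule lmr)+)

lemma X13_mult: "X13 A (x \<diamond> y) = X13 A x \<odot> X13 A y"
proof (rule lm_ext2[where \<phi>="\<lambda>x y. X13 A (x \<diamond> y)"])
  fix a b :: "'u \<times> 'u \<times> 'l"
  show "X13 A (bv a \<diamond> bv b) = X13 A (bv a) \<odot> X13 A (bv b)"
    by (cases a, cases b) (simp only: bv3 M3 M4 X13_t3 U1_mult)
qed ((rule lmr)+)

lemma flip21_mult: "flip21 (x \<diamond> y) = flip21 x \<diamond> flip21 y"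
proof (rule lm_ext2[where \<phi>="\<lambda>x y. flip21 (x \<diamond> y)"])
  fix a b :: "'u \<times> 'u \<times> 'l"
  show "flip21 (bv a \<diamond> bv b) = flip21 (bv a) \<diamond> flip21 (bv b)"
    by (cases a, cases b) (simp only: bv3 M3 flip21_t3)
qed ((rule lmr)+)

lemma P12_mult: "P12 (x \<odot> y) = P12 x \<odot> P12 y"
proof (rule lm_ext2[where \<phi>="\<lambda>x y. P12 (x \<odot> y)"])
  fix a b :: "'u \<times> 'u \<times> 'u \<times> 'l"
  show "P12 (bv a \<odot> bv b) = P12 (bv a) \<odot> P12 (bv b)"
    by (cases a, cases b) (simp only: bv4 M4 P12_t4)
qed ((rule lmr)+)

lemma P23_mult: "P23 (x \<odot> y) = P23 x \<odot> P23 y"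
proof (rule lm_ext2[where \<phi>="\<lambda>x y. P23 (x \<odot> y)"])
  fix a b :: "'u \<times> 'u \<times> 'u \<times> 'l"
  show "P23 (bv a \<odot> bv b) = P23 (bv a) \<odot> P23 (bv b)"
    by (cases a, cases b) (simp only: bv4 M4 P23_t4)
qed ((rule lmr)+)

lemma coact_mult: "lin (lcoact B) (x \<bullet> y) = bilin (tmul (hmul A) (lmul B)) (lin (lcoact B) x) (lin (lcoact B) y)"
proof (rule lm_ext2[where \<phi>="\<lambda>x y. lin (lcoact B) (x \<bullet> y)"])
  fix a b
  show "lin (lcoact B) (bv a \<bullet> bv b) = bilin (tmul (hmul A) (lmul B)) (lin (lcoact B) (bv a)) (lin (lcoact B) (bv b))"
    using ba unfolding base_algebra_def by simp
qed ((rule lmr)+)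

lemma coact_one: "lin (lcoact B) L1 = tens U1 L1"
  using ba unfolding base_algebra_def by simp

lemma sh3_mult: "sh3 B (x \<diamond> y) = sh3 B x \<odot> sh3 B y"
proof (rule lm_ext2[where \<phi>="\<lambda>x y. sh3 B (x \<diamond> y)"])
  fix a b :: "'u \<times> 'u \<times> 'l"
  show "sh3 B (bv a \<diamond> bv b) = sh3 B (bv a) \<odot> sh3 B (bv b)"
    by (cases a, cases b) (simp only: bv3 M3 M4' sh3_t3 coact_mult)
qed ((rule lmr)+)

lemma X23_one: "X23 A (one3 A B) = one4" unfolding one3_def X23_t3 ..
lemma X12_one: "X12 A (one3 A B) = one4" unfolding one3_def X12_t3 ..
lemma X13_one: "X13 A (one3 A B) = one4" unfolding one3_def X13_t3 ..
lemma flip21_one: "flip21 (one3 A B) = one3 A B" unfolding one3_def flip21_t3 ..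
lemma P12_one: "P12 one4 = one4" unfolding P12_t4 ..
lemma P23_one: "P23 one4 = one4" unfolding P23_t4 ..
lemma sh3_one: "sh3 B (one3 A B) = one4" unfolding one3_def sh3_t3 coact_one ..

lemma P12_P12: "P12 (P12 x) = x"
  by (rule lm_ext[where \<phi>="\<lambda>x. P12 (P12 x)"]) ((rule lmr)+ | simp add: P12_def split_paired_all)+
lemma P23_P23: "P23 (P23 x) = x"
  by (rule lm_ext[where \<phi>="\<lambda>x. P23 (P23 x)"]) ((rule lmr)+ | simp add: P23_def split_paired_all)+
lemma flip21_flip21: "flip21 (flip21 x) = x"
  by (rule lm_ext[where \<phi>="\<lambda>x. flip21 (flip21 x)"]) ((rule lmr)+ | simp add: flip21_def split_paired_all)+
lemma braid: "P23 (P12 (P23 x)) = P12 (P23 (P12 x))"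
  by (rule lm_ext[where \<phi>="\<lambda>x. P23 (P12 (P23 x))"]) ((rule lmr)+ | simp add: P12_def P23_def split_paired_all)+

lemma P12_sh3: "P12 (sh3 B x) = sh3 B (flip21 x)"
  by (rule lm_ext[where \<phi>="\<lambda>x. P12 (sh3 B x)"]) ((rule lmr)+ | simp add: P12_def sh3_def flip21_def lin_lin split_def)+
lemma P23_X23: "P23 (X23 A x) = X23 A (flip21 x)"
  by (rule lm_ext[where \<phi>="\<lambda>x. P23 (X23 A x)"]) ((rule lmr)+ | simp add: P23_def X23_def flip21_def lin_lin split_def)+
lemma P12_X23: "P12 (X23 A x) = X13 A x"
  by (rule lm_ext[where \<phi>="\<lambda>x. P12 (X23 A x)"]) ((rule lmr)+ | simp add: P12_def X23_def X13_def lin_lin split_def)+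
lemma P23_X13: "P23 (X13 A x) = X12 A x"
  by (rule lm_ext[where \<phi>="\<lambda>x. P23 (X13 A x)"]) ((rule lmr)+ | simp add: P23_def X13_def X12_def lin_lin split_def)+
lemma P23_X12: "P23 (X12 A x) = X13 A x"
  by (rule lm_ext[where \<phi>="\<lambda>x. P23 (X12 A x)"]) ((rule lmr)+ | simp add: P23_def X13_def X12_def lin_lin split_def)+
lemma P12_X13: "P12 (X13 A x) = X23 A x"
  by (rule lm_ext[where \<phi>="\<lambda>x. P12 (X13 A x)"]) ((rule lmr)+ | simp add: P12_def X23_def X13_def lin_lin split_def)+

end

definition J :: "('u \<Rightarrow>\<^sub>0 'k::field) \<Rightarrow> ('l \<Rightarrow>\<^sub>0 'k) \<Rightarrow> ('u \<times> 'u \<Rightarrow>\<^sub>0 'k) \<Rightarrow> ('u \<times> 'u \<times> 'u \<times> 'l \<Rightarrow>\<^sub>0 'k)" where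
  "J y z v = lin (\<lambda>(p, q). tens (bv p) (tens (bv q) (tens y z))) v"
definition K :: "('u \<Rightarrow>\<^sub>0 'k::field) \<Rightarrow> ('l \<Rightarrow>\<^sub>0 'k) \<Rightarrow> ('u \<times> 'u \<Rightarrow>\<^sub>0 'k) \<Rightarrow> ('u \<times> 'u \<times> 'u \<times> 'l \<Rightarrow>\<^sub>0 'k)" where
  "K x z v = lin (\<lambda>(p, q). tens x (tens (bv p) (tens (bv q) z))) v"
definition Lf :: "('l \<Rightarrow>\<^sub>0 'k) \<Rightarrow> ('u \<times> 'u \<times> 'u \<Rightarrow>\<^sub>0 'k::field) \<Rightarrow> ('u \<times> 'u \<times> 'u \<times> 'l \<Rightarrow>\<^sub>0 'k)" where
  "Lf L w = lin (\<lambda>(a, b, c). tens (bv a) (tens (bv b) (tens (bv c) L))) w"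

lemma lm_JK[intro]: "lm (J y z)" "lm (K x z)" "lm (Lf L)"
  unfolding J_def K_def Lf_def by (rule lm_lin0)+

lemmas lmr2 = lmr lm_comp[OF lm_JK(1)] lm_comp[OF lm_JK(2)] lm_comp[OF lm_JK(3)]

lemma J_tens: "J y z (tens a b) = tens a (tens b (tens y z))"
  by (rule lm_ext2[where \<phi>="\<lambda>a b. J y z (tens a b)"]) ((rule lmr2)+ | simp add: J_def)+
lemma K_tens: "K x z (tens a b) = tens x (tens a (tens b z))"
  by (rule lm_ext2[where \<phi>="\<lambda>a b. K x z (tens a b)"]) ((rule lmr2)+ | simp add: K_def)+
lemma Lf_t3: "Lf L (tens x (tens y z)) = tens x (tens y (tens z L))"
  by (rule lm_ext3[where \<phi>="\<lambda>x y z. Lf L (tens x (tens y z))"]) ((rule lmr2)+ | simp add: Lf_def)+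

context setting
begin

lemma J_mult: "J y z v \<odot> J y' z' v' = J (y \<cdot> y') (z \<bullet> z') (v \<star> v')"
proof (rule lm_ext2[where \<phi>="\<lambda>v v'. J y z v \<odot> J y' z' v'"])
  fix a b :: "'u \<times> 'u"
  show "J y z (bv a) \<odot> J y' z' (bv b) = J (y \<cdot> y') (z \<bullet> z') (bv a \<star> bv b)"
    by (cases a, cases b) (simp only: bv_pair J_tens M4 M2)
qed ((rule lmr2)+)

lemma K_mult: "K x z v \<odot> K x' z' v' = K (x \<cdot> x') (z \<bullet> z') (v \<star> v')"
proof (rule lm_ext2[where \<phi>="\<lambda>v v'. K x z v \<odot> K x' z' v'"])
  fix a b :: "'u \<times> 'u"
  show "K x z (bv a) \<odot> K x' z' (bv b) = K (x \<cdot> x') (z \<bullet> z') (bv a \<star> bv b)"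
    by (cases a, cases b) (simp only: bv_pair K_tens M4 M2)
qed ((rule lmr2)+)

lemma Lf_mult: "Lf L1 (bilin (tmul (hmul A) (tmul (hmul A) (hmul A))) w w') = Lf L1 w \<odot> Lf L1 w'"
proof (rule lm_ext2[where \<phi>="\<lambda>w w'. Lf L1 (bilin (tmul (hmul A) (tmul (hmul A) (hmul A))) w w')"])
  fix a b :: "'u \<times> 'u \<times> 'u"
  show "Lf L1 (bilin (tmul (hmul A) (tmul (hmul A) (hmul A))) (bv a) (bv b)) = Lf L1 (bv a) \<odot> Lf L1 (bv b)"
    by (cases a, cases b) (simp only: bv3 bilin_tmul_tens Lf_t3 M4 L1_mult)
qed ((rule lmr2)+)

lemma P12_J: "P12 (J y z v) = J y z (flip2 v)"
  by (rule lm_ext[where \<phi>="\<lambda>v. P12 (J y z v)"]) ((rule lmr2)+ | simp add: J_def P12_t4 split_paired_all)+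
lemma P23_K: "P23 (K x z v) = K x z (flip2 v)"
  by (rule lm_ext[where \<phi>="\<lambda>v. P23 (K x z v)"]) ((rule lmr2)+ | simp add: K_def P23_t4 split_paired_all)+

lemma X12_Rlift: "X12 A (Rlift B v) = J U1 L1 v"
proof (rule lm_ext[where \<phi>="\<lambda>v. X12 A (Rlift B v)"])
  fix a :: "'u \<times> 'u"
  show "X12 A (Rlift B (bv a)) = J U1 L1 (bv a)"
    by (cases a) (simp only: bv_pair Rlift_t3 X12_t3 J_tens)
qed ((rule lmr2)+)

lemma X23_Rlift: "X23 A (Rlift B v) = K U1 L1 v"
proof (rule lm_ext[where \<phi>="\<lambda>v. X23 A (Rlift B v)"])
  fix a :: "'u \<times> 'u"
  show "X23 A (Rlift B (bv a)) = K U1 L1 (bv a)"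
    by (cases a) (simp only: bv_pair Rlift_t3 X23_t3 K_tens)
qed ((rule lmr2)+)

lemma DeltaL_bv: "DeltaL A (bv (a, b, l)) = J (bv b) (bv l) (hcomul A a)"
  by (simp add: DeltaL_def J_def)
lemma DeltaR_bv: "DeltaR A (bv (a, b, l)) = K (bv a) (bv l) (hcomul A b)"
  by (simp add: DeltaR_def K_def)

lemma qt_comm: "R \<star> hcomul A a = flip2 (hcomul A a) \<star> R"
  using qt unfolding quasitriangular_def by blast

lemma R1: "X12 A (Rlift B R) \<odot> DeltaL A X = P12 (DeltaL A X) \<odot> X12 A (Rlift B R)"
proof (rule lm_ext[where \<phi>="\<lambda>X. X12 A (Rlift B R) \<odot> DeltaL A X"])
  fix a :: "'u \<times> 'u \<times> 'l"
  show "X12 A (Rlift B R) \<odot> DeltaL A (bv a) = P12 (DeltaL A (bv a)) \<odot> X12 A (Rlift B R)"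
    by (cases a) (simp add: X12_Rlift DeltaL_bv P12_J J_mult qt_comm)
qed ((rule lmr2)+)

lemma R2: "X23 A (Rlift B R) \<odot> DeltaR A X = P23 (DeltaR A X) \<odot> X23 A (Rlift B R)"
proof (rule lm_ext[where \<phi>="\<lambda>X. X23 A (Rlift B R) \<odot> DeltaR A X"])
  fix a :: "'u \<times> 'u \<times> 'l"
  show "X23 A (Rlift B R) \<odot> DeltaR A (bv a) = P23 (DeltaR A (bv a)) \<odot> X23 A (Rlift B R)"
    by (cases a) (simp add: X23_Rlift DeltaR_bv P23_K K_mult qt_comm)
qed ((rule lmr2)+)

lemma DeltaL_t: "DeltaL A (tens (bv x) (tens y z)) = J y z (hcomul A x)"
proof (rule lm_ext2[where \<phi>="\<lambda>y z. DeltaL A (tens (bv x) (tens y z))"])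
  fix a b
  show "DeltaL A (tens (bv x) (tens (bv a) (bv b))) = J (bv a) (bv b) (hcomul A x)"
    by (simp add: DeltaL_bv)
qed (unfold J_def, (rule lmr2 lm_lin_fun | simp add: split_def)+)

lemma Lf_aux: "Lf L1 (lin (\<lambda>(p, q). bv (p, q, y::'u)) w) = J (bv y) L1 w"
proof (rule lm_ext[where \<phi>="\<lambda>w. Lf L1 (lin (\<lambda>(p, q). bv (p, q, y)) w)"])
  fix a :: "'u \<times> 'u"
  show "Lf L1 (lin (\<lambda>(p, q). bv (p, q, y)) (bv a)) = J (bv y) L1 (bv a)"
    by (cases a) (hypsubst, simp only: lin_bv prod.case, simp only: bv3 bv_pair Lf_t3 J_tens)
qed ((rule lmr2)+)

lemma Lf_DL: "Lf L1 (lin (\<lambda>(x, y). lin (\<lambda>(p, q). bv (p, q, y)) (hcomul A x)) v) = DeltaL A (Rlift B v)"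
proof (rule lm_ext[where \<phi>="\<lambda>v. Lf L1 (lin (\<lambda>(x, y). lin (\<lambda>(p, q). bv (p, q, y)) (hcomul A x)) v)"])
  fix a :: "'u \<times> 'u"
  show "Lf L1 (lin (\<lambda>(x, y). lin (\<lambda>(p, q). bv (p, q, y)) (hcomul A x)) (bv a)) = DeltaL A (Rlift B (bv a))"
    by (cases a) (hypsubst, simp only: lin_bv prod.case, simp only: Lf_aux, simp only: bv_pair Rlift_t3 DeltaL_t)
qed ((rule lmr2)+)

lemma Lf_13: "Lf L1 (emb13 A v) = X13 A (Rlift B v)"
proof (rule lm_ext[where \<phi>="\<lambda>v. Lf L1 (emb13 A v)"])
  fix a :: "'u \<times> 'u"
  show "Lf L1 (emb13 A (bv a)) = X13 A (Rlift B (bv a))"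
    by (cases a) (simp only: bv_pair emb13_t Lf_t3 Rlift_t3 X13_t3)
qed ((rule lmr2)+)

lemma Lf_23: "Lf L1 (emb23 A v) = X23 A (Rlift B v)"
proof (rule lm_ext[where \<phi>="\<lambda>v. Lf L1 (emb23 A v)"])
  fix a :: "'u \<times> 'u"
  show "Lf L1 (emb23 A (bv a)) = X23 A (Rlift B (bv a))"
    by (cases a) (simp only: bv_pair emb23_t Lf_t3 Rlift_t3 X23_t3)
qed ((rule lmr2)+)

abbreviation "Rl \<equiv> Rlift B R"
abbreviation "R12 \<equiv> X12 A Rl"
abbreviation "R13 \<equiv> X13 A Rl"
abbreviation "R23 \<equiv> X23 A Rl"

lemma Q: "DeltaL A Rl = R13 \<odot> R23"
proof -
  have "lin (\<lambda>(x, y). lin (\<lambda>(p, q). bv (p, q, y)) (hcomul A x)) R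
       = bilin (tmul (hmul A) (tmul (hmul A) (hmul A))) (emb13 A R) (emb23 A R)"
    using qt unfolding quasitriangular_def by blast
  then have "Lf L1 (lin (\<lambda>(x, y). lin (\<lambda>(p, q). bv (p, q, y)) (hcomul A x)) R)
     = Lf L1 (emb13 A R) \<odot> Lf L1 (emb23 A R)" by (simp add: Lf_mult)
  then show ?thesis by (simp add: Lf_DL Lf_13 Lf_23)
qed

lemma QYBE: "R12 \<odot> R13 \<odot> R23 = R23 \<odot> R13 \<odot> R12"
proof -
  have "R12 \<odot> DeltaL A Rl = P12 (DeltaL A Rl) \<odot> R12" by (rule R1)
  then show ?thesis by (simp add: Q P12_mult P12_X13 P12_X23 a4.assoc)
qed

end

context setting
begin

lemma sh3_Rlift: "sh3 B (Rlift B v) = X12 A (Rlift B v)"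
proof (rule lm_ext[where \<phi>="\<lambda>v. sh3 B (Rlift B v)"])
  fix a :: "'u \<times> 'u"
  show "sh3 B (Rlift B (bv a)) = X12 A (Rlift B (bv a))"
    by (cases a) (simp only: bv_pair Rlift_t3 sh3_t3 X12_t3 coact_one)
qed ((rule lmr2)+)

lemma comul_mult: "Cm (x \<cdot> y) = Cm x \<star> Cm y"
proof (rule lm_ext2[where \<phi>="\<lambda>x y. Cm (x \<cdot> y)"])
  fix a b
  show "Cm (bv a \<cdot> bv b) = Cm (bv a) \<star> Cm (bv b)"
    using hopfA unfolding hopf_algebra_def by simp
qed ((rule lmr2)+)

lemma comul_one: "Cm U1 = tens U1 U1"
  using hopfA unfolding hopf_algebra_def by simp

lemma DeltaL_t3: "DeltaL A (tens x (tens y z)) = J y z (Cm x)"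
proof (rule lm_ext3[where \<phi>="\<lambda>x y z. DeltaL A (tens x (tens y z))"])
  fix a b c
  show "DeltaL A (tens (bv a) (tens (bv b) (bv c))) = J (bv b) (bv c) (Cm (bv a))"
    by (simp add: DeltaL_bv)
qed (unfold J_def, (rule lmr2 lm_lin_fun | simp add: split_def)+)

lemma DeltaL_mult: "DeltaL A (x \<diamond> y) = DeltaL A x \<odot> DeltaL A y"
proof (rule lm_ext2[where \<phi>="\<lambda>x y. DeltaL A (x \<diamond> y)"])
  fix a b :: "'u \<times> 'u \<times> 'l"
  show "DeltaL A (bv a \<diamond> bv b) = DeltaL A (bv a) \<odot> DeltaL A (bv b)"
    by (cases a, cases b) (simp only: bv3 M3 DeltaL_t3 J_mult comul_mult)
qed ((rule lmr2)+)

lemma DeltaL_one: "DeltaL A (one3 A B) = one4"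
  unfolding one3_def DeltaL_t3 comul_one J_tens ..

abbreviation "Finv \<equiv> ainv (mul3 A B) (one3 A B) (flip21 F)"
abbreviation "Rb \<equiv> Finv \<diamond> Rl \<diamond> F"
abbreviation "Phi \<equiv> DeltaL A F \<odot> sh3 B F"

lemma F_inv: "invertible_in (mul3 A B) (one3 A B) F"
  using dt unfolding dyn_twist_def by blast

lemma cocycle: "Phi = DeltaR A F \<odot> X23 A F"
  using dt unfolding dyn_twist_def by blast

lemma F21_inv: "invertible_in (mul3 A B) (one3 A B) (flip21 F)"
  by (rule hom_invertible(1)[OF alg3 alg3 flip21_mult flip21_one F_inv])

lemma key: "flip21 F \<diamond> Rb = Rl \<diamond> F"
  using a3.ainv(1)[OF F21_inv] by (simp add: a3.assoc[symmetric])

lemma hom4_inv: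
  assumes "\<And>x y. h (x \<odot> y) = h x \<odot> h y" "h one4 = one4" "invertible_in (mul4 A B) one4 x"
  shows "invertible_in (mul4 A B) one4 (h x)"
  by (rule hom_invertible(1)[OF alg4 alg4 assms])

lemma Phi_inv: "invertible_in (mul4 A B) one4 Phi"
  by (intro a4.invertible_mult hom_invertible(1)[OF alg3 alg4 DeltaL_mult DeltaL_one F_inv]
       hom_invertible(1)[OF alg3 alg4 sh3_mult sh3_one F_inv])

lemma S: "R12 \<odot> Phi = P12 Phi \<odot> sh3 B Rb"
proof -
  have "R12 \<odot> Phi = (R12 \<odot> DeltaL A F) \<odot> sh3 B F" by (simp add: a4.assoc)
  also have "\<dots> = P12 (DeltaL A F) \<odot> (sh3 B Rl \<odot> sh3 B F)" by (simp add: R1 a4.assoc sh3_Rlift)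
  also have "\<dots> = P12 (DeltaL A F) \<odot> sh3 B (flip21 F \<diamond> Rb)" by (simp add: sh3_mult[symmetric] key)
  also have "\<dots> = P12 Phi \<odot> sh3 B Rb" by (simp add: sh3_mult P12_sh3 P12_mult a4.assoc)
  finally show ?thesis .
qed

lemma T: "R23 \<odot> Phi = P23 Phi \<odot> X23 A Rb"
proof -
  have "R23 \<odot> Phi = (R23 \<odot> DeltaR A F) \<odot> X23 A F" by (simp add: cocycle a4.assoc)
  also have "\<dots> = P23 (DeltaR A F) \<odot> (R23 \<odot> X23 A F)" by (simp add: R2 a4.assoc)
  also have "\<dots> = P23 (DeltaR A F) \<odot> X23 A (flip21 F \<diamond> Rb)" by (simp add: X23_mult[symmetric] key)
  also have "\<dots> = P23 Phi \<odot> X23 A Rb" by (simp add: cocycle X23_mult P23_X23 P23_mult a4.assoc)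
  finally show ?thesis .
qed

lemma DYBE: "X12 A Rb \<odot> sh2 B Rb \<odot> X23 A Rb = sh1 B Rb \<odot> X13 A Rb \<odot> sh3 B Rb"
proof -
  have R13a: "R13 = P23 R12" by (simp add: P23_X12)
  have R12a: "R12 = P23 (P12 R23)" by (simp add: P12_X23 P23_X13)
  have R13b: "R13 = P12 R23" by (simp add: P12_X23)
  have R23b: "R23 = P12 (P23 R12)" by (simp add: P23_X12 P12_X13)
  have s1: "R13 \<odot> P23 Phi = P23 (P12 Phi) \<odot> sh2 B Rb"
    by (simp only: R13a P23_mult[symmetric] S) (simp add: P23_mult sh2_P23)
  have s2: "R12 \<odot> P23 (P12 Phi) = P23 (P12 (P23 Phi)) \<odot> X12 A Rb"
    by (simp only: R12a P12_mult[symmetric] P23_mult[symmetric] T) (simp add: P23_mult P12_mult P12_X23 P23_X13)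
  have s3: "R13 \<odot> P12 Phi = P12 (P23 Phi) \<odot> X13 A Rb"
    by (simp only: R13b P12_mult[symmetric] T) (simp add: P12_mult P12_X23)
  have s4: "R23 \<odot> P12 (P23 Phi) = P12 (P23 (P12 Phi)) \<odot> sh1 B Rb"
    by (simp only: R23b P12_mult[symmetric] P23_mult[symmetric] S) (simp add: P23_mult P12_mult sh1_P12)
  have L: "R12 \<odot> R13 \<odot> R23 \<odot> Phi = P23 (P12 (P23 Phi)) \<odot> (X12 A Rb \<odot> sh2 B Rb \<odot> X23 A Rb)"
  proof -
    have "R12 \<odot> R13 \<odot> R23 \<odot> Phi = R12 \<odot> ((R13 \<odot> P23 Phi) \<odot> X23 A Rb)"
      by (simp add: a4.assoc T)
    also have "\<dots> = (R12 \<odot> P23 (P12 Phi)) \<odot> sh2 B Rb \<odot> X23 A Rb"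
      by (simp add: s1 a4.assoc)
    also have "\<dots> = P23 (P12 (P23 Phi)) \<odot> (X12 A Rb \<odot> sh2 B Rb \<odot> X23 A Rb)"
      by (simp add: s2 a4.assoc)
    finally show ?thesis .
  qed
  have Rr: "R23 \<odot> R13 \<odot> R12 \<odot> Phi = P23 (P12 (P23 Phi)) \<odot> (sh1 B Rb \<odot> X13 A Rb \<odot> sh3 B Rb)"
  proof -
    have "R23 \<odot> R13 \<odot> R12 \<odot> Phi = R23 \<odot> ((R13 \<odot> P12 Phi) \<odot> sh3 B Rb)"
      by (simp add: a4.assoc S)
    also have "\<dots> = (R23 \<odot> P12 (P23 Phi)) \<odot> X13 A Rb \<odot> sh3 B Rb"
      by (simp add: s3 a4.assoc)
    also have "\<dots> = P12 (P23 (P12 Phi)) \<odot> (sh1 B Rb \<odot> X13 A Rb \<odot> sh3 B Rb)"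
      by (simp add: s4 a4.assoc)
    finally show ?thesis by (simp add: braid)
  qed
  have inv: "invertible_in (mul4 A B) one4 (P23 (P12 (P23 Phi)))"
    by (intro hom4_inv[OF P23_mult P23_one] hom4_inv[OF P12_mult P12_one] Phi_inv)
  show ?thesis
    by (rule a4.cancel_l[OF inv]) (use L Rr QYBE in simp)
qed

end

lemma lm_push: "lm \<phi> \<Longrightarrow> \<phi> (lin f v) = lin (\<lambda>a. \<phi> (f a)) v"
proof -
  assume a: "lm \<phi>"
  have "\<phi> (lin f v) = lin (\<lambda>a. \<phi> (bv a)) (lin f v)" by (rule lm_expand[OF a])
  also have "\<dots> = lin (\<lambda>a. lin (\<lambda>b. \<phi> (bv b)) (f a)) v" by (rule lin_lin)
  also have "\<dots> = lin (\<lambda>a. \<phi> (f a)) v"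
  proof -
    have "\<And>a. lin (\<lambda>b. \<phi> (bv b)) (f a) = \<phi> (f a)" by (rule lm_expand[OF a, symmetric])
    then show ?thesis by (simp only:)
  qed
  finally show ?thesis .
qed

lemma bilin_lin_left: "bilin m (lin f v) w = lin (\<lambda>a. bilin m (f a) w) v"
  by (rule lm_push[where \<phi>="\<lambda>x. bilin m x w"]) (rule lmr2)+
lemma bilin_lin_right: "bilin m w (lin f v) = lin (\<lambda>a. bilin m w (f a)) v"
  by (rule lm_push[where \<phi>="\<lambda>x. bilin m w x"]) (rule lmr2)+

lemma keys_lin: "Poly_Mapping.keys (lin f x) \<subseteq> (\<Union>a\<in>Poly_Mapping.keys x. Poly_Mapping.keys (f a))"
proof
  fix b assume "b \<in> Poly_Mapping.keys (lin f x)"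
  then have "(\<Sum>a\<in>Poly_Mapping.keys x. Poly_Mapping.lookup x a * Poly_Mapping.lookup (f a) b) \<noteq> 0"
    by (simp add: lin_def lookup_sum in_keys_iff)
  then obtain a where "a \<in> Poly_Mapping.keys x" "Poly_Mapping.lookup (f a) b \<noteq> 0"
  proof -
    assume h: "(\<Sum>a\<in>Poly_Mapping.keys x. Poly_Mapping.lookup x a * Poly_Mapping.lookup (f a) b) \<noteq> 0"
    show ?thesis
    proof (rule ccontr)
      assume "\<not> ?thesis"
      then have "\<forall>a\<in>Poly_Mapping.keys x. Poly_Mapping.lookup (f a) b = 0" using that by blast
      then have "(\<Sum>a\<in>Poly_Mapping.keys x. Poly_Mapping.lookup x a * Poly_Mapping.lookup (f a) b) = 0"
        by (intro sum.neutral) auto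
      with h show False by simp
    qed
  qed
  then show "b \<in> (\<Union>a\<in>Poly_Mapping.keys x. Poly_Mapping.keys (f a))" by (auto simp: in_keys_iff)
qed

lemma keys_tens_bv: "Poly_Mapping.keys (tens (bv a) w) \<subseteq> {a} \<times> Poly_Mapping.keys w"
proof -
  have "tens (bv a) w = lin (\<lambda>b. bv (a, b)) w" by (simp add: tens_lin)
  then show ?thesis using keys_lin[of "\<lambda>b. bv (a, b)" w] by auto
qed

definition W :: "('u, 'k::field) hopf_alg \<Rightarrow> ('u, 'l, 'k) base_alg \<Rightarrow> 'u \<Rightarrow> 'u \<Rightarrow> 'u
    \<Rightarrow> ('u \<times> 'u \<times> 'l \<Rightarrow>\<^sub>0 'k) \<Rightarrow> ('u \<times> 'u \<times> 'l \<Rightarrow>\<^sub>0 'k)" where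
  "W A B a b c Y = lin (\<lambda>(f1, f2, f3).
               tens (bilin (hmul A) (bv a) (bv f1))
                 (tens (bilin (hmul A) (bv b) (bv f2)) (actx B (bv c) (bv f3)))) Y"
definition W' :: "('u, 'k::field) hopf_alg \<Rightarrow> ('u, 'l, 'k) base_alg \<Rightarrow> 'u \<Rightarrow> 'u \<Rightarrow> 'u
    \<Rightarrow> ('u \<times> 'u \<times> 'l \<Rightarrow>\<^sub>0 'k) \<Rightarrow> ('u \<times> 'u \<times> 'l \<Rightarrow>\<^sub>0 'k)" where
  "W' A B a b c Y = lin (\<lambda>(f1, f2, f3).
               tens (bilin (hmul A) (bv b) (bv f1))
                 (tens (bilin (hmul A) (bv a) (bv f2)) (actx B (bv c) (bv f3)))) Y"
definition Qk :: "('u, 'l, 'k::field) base_alg \<Rightarrow> 'u \<Rightarrow> ('u \<times> 'u \<times> 'l \<Rightarrow>\<^sub>0 'k) \<Rightarrow> ('u \<times> 'u \<times> 'l \<Rightarrow>\<^sub>0 'k)" where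
  "Qk B k Y = lin (\<lambda>(f1, f2, f3). tens (bv f1) (tens (bv f2) (actx B (bv k) (bv f3)))) Y"
definition Tw :: "('u, 'k::field) hopf_alg \<Rightarrow> ('u, 'l, 'k) base_alg \<Rightarrow> ('u \<Rightarrow>\<^sub>0 'k)
    \<Rightarrow> ('u \<times> 'u \<times> 'l \<Rightarrow>\<^sub>0 'k) \<Rightarrow> ('u \<times> 'u \<times> 'l \<Rightarrow>\<^sub>0 'k)" where
  "Tw A B h Y = lin (\<lambda>(a, b, c). W A B a b c Y) (Delta2 A h)"
definition Tw' :: "('u, 'k::field) hopf_alg \<Rightarrow> ('u, 'l, 'k) base_alg \<Rightarrow> ('u \<Rightarrow>\<^sub>0 'k)
    \<Rightarrow> ('u \<times> 'u \<times> 'l \<Rightarrow>\<^sub>0 'k) \<Rightarrow> ('u \<times> 'u \<times> 'l \<Rightarrow>\<^sub>0 'k)" where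
  "Tw' A B h Y = lin (\<lambda>(a, b, c). W' A B a b c Y) (Delta2 A h)"

lemma lm_W[intro]: "lm (W A B a b c)" "lm (W' A B a b c)" "lm (Qk B k)"
  unfolding W_def W'_def Qk_def by (rule lm_lin0)+

lemmas lmr3 = lmr2 lm_comp[OF lm_W(1)] lm_comp[OF lm_W(2)] lm_comp[OF lm_W(3)]

lemma lm_act[intro]: "lm (actx B u)" unfolding actx_def by (rule lm_bilin2 lm_id)+

lemmas lmr4 = lmr3 lm_comp[OF lm_act]

context setting
begin

lemma W_t3: "W A B a b c (tens x (tens y z)) = tens (bv a \<cdot> x) (tens (bv b \<cdot> y) (actx B (bv c) z))"
  by (rule lm_ext3[where \<phi>="\<lambda>x y z. W A B a b c (tens x (tens y z))"]) ((rule lmr4)+ | simp add: W_def)+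

lemma W'_t3: "W' A B a b c (tens x (tens y z)) = tens (bv b \<cdot> x) (tens (bv a \<cdot> y) (actx B (bv c) z))"
  by (rule lm_ext3[where \<phi>="\<lambda>x y z. W' A B a b c (tens x (tens y z))"]) ((rule lmr4)+ | simp add: W'_def)+

lemma Q_t3: "Qk B k (tens x (tens y z)) = tens x (tens y (actx B (bv k) z))"
  by (rule lm_ext3[where \<phi>="\<lambda>x y z. Qk B k (tens x (tens y z))"]) ((rule lmr4)+ | simp add: Qk_def)+

lemma um_assoc: "x \<cdot> y \<cdot> z = x \<cdot> (y \<cdot> z)"
  using algU unfolding is_algebra_def by blast

lemma act_mult: "c \<in> BH \<Longrightarrow> actx B (bv c) (x \<bullet> y) = lin (\<lambda>p. actx B (bv (fst p)) x \<bullet> actx B (bv (snd p)) y) (hcomul A c)"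
  using ba unfolding base_algebra_def by (simp add: split_def)

lemma act_one: "c \<in> BH \<Longrightarrow> actx B (bv c) L1 = smul (hcounit A c) L1"
  using ba unfolding base_algebra_def by simp

lemma comul_keys: "c \<in> BH \<Longrightarrow> p \<in> Poly_Mapping.keys (hcomul A c) \<Longrightarrow> fst p \<in> BH \<and> snd p \<in> BH"
  using hs unfolding hopf_subalgebra_def by fastforce

lemma Wmult: "c \<in> BH \<Longrightarrow> W A B a b c (X \<diamond> Y) = lin (\<lambda>p. W A B a b (fst p) X \<diamond> Qk B (snd p) Y) (hcomul A c)"
proof (rule lm_ext2[where \<phi>="\<lambda>X Y. W A B a b c (X \<diamond> Y)"])
  assume c: "c \<in> BH"
  fix f e :: "'u \<times> 'u \<times> 'l"
  obtain f1 f2 f3 e1 e2 e3 where fe: "f = (f1, f2, f3)" "e = (e1, e2, e3)" by (cases f, cases e) auto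
  have "W A B a b c (bv f \<diamond> bv e) = tens (bv a \<cdot> (bv f1 \<cdot> bv e1)) (tens (bv b \<cdot> (bv f2 \<cdot> bv e2))
      (lin (\<lambda>p. actx B (bv (fst p)) (bv f3) \<bullet> actx B (bv (snd p)) (bv e3)) (hcomul A c)))"
    unfolding fe by (simp only: bv3 M3 W_t3 act_mult[OF c])
  also have "\<dots> = lin (\<lambda>p. tens (bv a \<cdot> bv f1 \<cdot> bv e1) (tens (bv b \<cdot> bv f2 \<cdot> bv e2)
       (actx B (bv (fst p)) (bv f3) \<bullet> actx B (bv (snd p)) (bv e3)))) (hcomul A c)"
    by (subst lm_push[where \<phi>="\<lambda>w. tens _ (tens _ w)"]) ((rule lmr4)+, simp only: um_assoc)
  also have "\<dots> = lin (\<lambda>p. W A B a b (fst p) (bv f) \<diamond> Qk B (snd p) (bv e)) (hcomul A c)"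
    unfolding fe by (simp only: bv3 M3 W_t3 Q_t3)
  finally show "W A B a b c (bv f \<diamond> bv e) = lin (\<lambda>p. W A B a b (fst p) (bv f) \<diamond> Qk B (snd p) (bv e)) (hcomul A c)" .
qed ((rule lmr4 lm_lin_fun)+)

end

context setting
begin

lemma coassoc_gen:
  "lin (\<lambda>p. lin (\<lambda>q. G (fst p) (fst q) (snd q)) (hcomul A (snd p))) (hcomul A x)
 = lin (\<lambda>p. lin (\<lambda>q. G (fst q) (snd q) (snd p)) (hcomul A (fst p))) (hcomul A x)"
proof -
  let ?g = "\<lambda>t. G (fst t) (fst (snd t)) (snd (snd t))"
  have "lin (\<lambda>(x, y). lin (\<lambda>(p, q). bv (p, q, y)) (hcomul A x)) (hcomul A x)
      = lin (\<lambda>(x, y). lin (\<lambda>(p, q). bv (x, p, q)) (hcomul A y)) (hcomul A x)"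
    using hopfA unfolding hopf_algebra_def by blast
  then have "lin ?g (lin (\<lambda>(x, y). lin (\<lambda>(p, q). bv (x, p, q)) (hcomul A y)) (hcomul A x))
     = lin ?g (lin (\<lambda>(x, y). lin (\<lambda>(p, q). bv (p, q, y)) (hcomul A x)) (hcomul A x))" by simp
  then show ?thesis by (simp add: lin_lin split_def)
qed

lemma Tw_bv: "Tw A B (bv x) Z = lin (\<lambda>p. lin (\<lambda>q. W A B (fst p) (fst q) (snd q) Z) (hcomul A (snd p))) (hcomul A x)"
  unfolding Tw_def Delta2_def by (simp add: lin_lin tens_lin split_def)

lemma Tw'_bv: "Tw' A B (bv x) Z = lin (\<lambda>p. lin (\<lambda>q. W' A B (fst p) (fst q) (snd q) Z) (hcomul A (snd p))) (hcomul A x)"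
  unfolding Tw'_def Delta2_def by (simp add: lin_lin tens_lin split_def)

lemma MultT:
  assumes x: "x \<in> BH"
  shows "Tw A B (bv x) (X \<diamond> Y) = lin (\<lambda>p. Tw A B (bv (fst p)) X \<diamond> Qk B (snd p) Y) (hcomul A x)"
proof -
  have "Tw A B (bv x) (X \<diamond> Y) = lin (\<lambda>p. lin (\<lambda>q. lin (\<lambda>s. W A B (fst p) (fst q) (fst s) X \<diamond> Qk B (snd s) Y)
      (hcomul A (snd q))) (hcomul A (snd p))) (hcomul A x)"
    unfolding Tw_bv
  proof (rule lin_cong, rule lin_cong)
    fix p q
    assume p: "p \<in> Poly_Mapping.keys (hcomul A x)" and q: "q \<in> Poly_Mapping.keys (hcomul A (snd p))"
    have "snd p \<in> BH" using comul_keys[OF x p] by simp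
    then have "snd q \<in> BH" using comul_keys[OF _ q] by simp
    then show "W A B (fst p) (fst q) (snd q) (X \<diamond> Y) = lin (\<lambda>s. W A B (fst p) (fst q) (fst s) X \<diamond> Qk B (snd s) Y) (hcomul A (snd q))"
      by (rule Wmult)
  qed
  also have "\<dots> = lin (\<lambda>p. lin (\<lambda>q. lin (\<lambda>s. W A B (fst p) (fst s) (snd s) X \<diamond> Qk B (snd q) Y)
      (hcomul A (fst q))) (hcomul A (snd p))) (hcomul A x)"
  proof (rule lin_cong)
    fix p
    show "lin (\<lambda>q. lin (\<lambda>s. W A B (fst p) (fst q) (fst s) X \<diamond> Qk B (snd s) Y) (hcomul A (snd q))) (hcomul A (snd p))
      = lin (\<lambda>q. lin (\<lambda>s. W A B (fst p) (fst s) (snd s) X \<diamond> Qk B (snd q) Y) (hcomul A (fst q))) (hcomul A (snd p))"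
      by (rule coassoc_gen[where G="\<lambda>b c1 c2. W A B (fst p) b c1 X \<diamond> Qk B c2 Y"])
  qed
  also have "\<dots> = lin (\<lambda>p. lin (\<lambda>q. lin (\<lambda>s. W A B (fst q) (fst s) (snd s) X \<diamond> Qk B (snd p) Y)
      (hcomul A (snd q))) (hcomul A (fst p))) (hcomul A x)"
    by (rule coassoc_gen[where G="\<lambda>a s c2. lin (\<lambda>s'. W A B a (fst s') (snd s') X \<diamond> Qk B c2 Y) (hcomul A s)"])
  also have "\<dots> = lin (\<lambda>p. Tw A B (bv (fst p)) X \<diamond> Qk B (snd p) Y) (hcomul A x)"
    unfolding Tw_bv by (simp add: bilin_lin_left)
  finally show ?thesis .
qed

lemma D1_bv: "Delta_one A B (bv g) = lin (\<lambda>q. tens (bv (fst q)) (tens (bv (snd q)) L1)) (hcomul A g)"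
  unfolding Delta_one_def by (simp add: split_def)

lemma DQ_aux: "tens (bv a) (tens (bv b) L1) \<diamond> Qk B k Y = W A B a b k Y"
proof (rule lm_ext[where \<phi>="\<lambda>Y. tens (bv a) (tens (bv b) L1) \<diamond> Qk B k Y"])
  fix e :: "'u \<times> 'u \<times> 'l"
  show "tens (bv a) (tens (bv b) L1) \<diamond> Qk B k (bv e) = W A B a b k (bv e)"
    by (cases e) (simp only: bv3 M3 Q_t3 W_t3 L1_mult U1_mult)
qed ((rule lmr4)+)

lemma DQ: "lin (\<lambda>p. Delta_one A B (bv (fst p)) \<diamond> Qk B (snd p) Y) (hcomul A x) = Tw A B (bv x) Y"
proof -
  have "lin (\<lambda>p. Delta_one A B (bv (fst p)) \<diamond> Qk B (snd p) Y) (hcomul A x)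
      = lin (\<lambda>p. lin (\<lambda>q. W A B (fst q) (snd q) (snd p) Y) (hcomul A (fst p))) (hcomul A x)"
    by (simp add: D1_bv bilin_lin_left DQ_aux)
  also have "\<dots> = Tw A B (bv x) Y"
    unfolding Tw_bv by (rule coassoc_gen[where G="\<lambda>a b c. W A B a b c Y", symmetric])
  finally show ?thesis .
qed

end

context setting
begin

lemma flip_lin: "flip21 (lin f v) = lin (\<lambda>a. flip21 (f a)) v"
  by (rule lm_push) (rule lm_defs)

lemma W'_flip: "W' A B a b c Y = flip21 (W A B a b c (flip21 Y))"
proof (rule lm_ext[where \<phi>="W' A B a b c"])
  fix e :: "'u \<times> 'u \<times> 'l"
  show "W' A B a b c (bv e) = flip21 (W A B a b c (flip21 (bv e)))"
    by (cases e) (simp only: bv3 flip21_t3 W_t3 W'_t3)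
qed ((rule lmr4)+)

lemma Q_flip: "flip21 (Qk B k (flip21 Y)) = Qk B k Y"
proof (rule lm_ext[where \<phi>="\<lambda>Y. flip21 (Qk B k (flip21 Y))"])
  fix e :: "'u \<times> 'u \<times> 'l"
  show "flip21 (Qk B k (flip21 (bv e))) = Qk B k (bv e)"
    by (cases e) (simp only: bv3 flip21_t3 Q_t3)
qed ((rule lmr4)+)

lemma Tw'_flip: "Tw' A B h Y = flip21 (Tw A B h (flip21 Y))"
  unfolding Tw'_def Tw_def flip_lin by (rule lin_cong) (simp add: split_def W'_flip)

lemma MultT':
  assumes x: "x \<in> BH"
  shows "Tw' A B (bv x) (X \<diamond> Y) = lin (\<lambda>p. Tw' A B (bv (fst p)) X \<diamond> Qk B (snd p) Y) (hcomul A x)"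
proof -
  have "Tw' A B (bv x) (X \<diamond> Y) = flip21 (Tw A B (bv x) (flip21 X \<diamond> flip21 Y))"
    by (simp add: Tw'_flip flip21_mult)
  also have "\<dots> = lin (\<lambda>p. flip21 (Tw A B (bv (fst p)) (flip21 X)) \<diamond> flip21 (Qk B (snd p) (flip21 Y))) (hcomul A x)"
    by (simp add: MultT[OF x] flip_lin flip21_mult)
  also have "\<dots> = lin (\<lambda>p. Tw' A B (bv (fst p)) X \<diamond> Qk B (snd p) Y) (hcomul A x)"
    by (simp add: Tw'_flip Q_flip)
  finally show ?thesis .
qed

lemma DQ': "lin (\<lambda>p. flip21 (Delta_one A B (bv (fst p))) \<diamond> Qk B (snd p) Y) (hcomul A x) = Tw' A B (bv x) Y"
proof -
  have "lin (\<lambda>p. flip21 (Delta_one A B (bv (fst p))) \<diamond> Qk B (snd p) Y) (hcomul A x)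
     = lin (\<lambda>p. flip21 (Delta_one A B (bv (fst p)) \<diamond> Qk B (snd p) (flip21 Y))) (hcomul A x)"
    by (simp add: flip21_mult Q_flip)
  also have "\<dots> = Tw' A B (bv x) Y"
    by (simp add: flip_lin[symmetric] DQ Tw'_flip)
  finally show ?thesis .
qed

lemma inv_left:
  assumes E: "\<And>g. g \<in> BH \<Longrightarrow> Tw' A B (bv g) X = X \<diamond> E g" and x: "x \<in> BH"
  shows "Tw' A B (bv x) (X \<diamond> Y) = X \<diamond> lin (\<lambda>p. E (fst p) \<diamond> Qk B (snd p) Y) (hcomul A x)"
proof -
  have "Tw' A B (bv x) (X \<diamond> Y) = lin (\<lambda>p. X \<diamond> (E (fst p) \<diamond> Qk B (snd p) Y)) (hcomul A x)"
    unfolding MultT'[OF x]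
  proof (rule lin_cong)
    fix p assume "p \<in> Poly_Mapping.keys (hcomul A x)"
    then have "fst p \<in> BH" using comul_keys[OF x] by simp
    then show "Tw' A B (bv (fst p)) X \<diamond> Qk B (snd p) Y = X \<diamond> (E (fst p) \<diamond> Qk B (snd p) Y)"
      by (simp add: E a3.assoc)
  qed
  then show ?thesis by (simp add: bilin_lin_right)
qed

lemma TF: "g \<in> BH \<Longrightarrow> Tw A B (bv g) F = F \<diamond> Delta_one A B (bv g)"
proof -
  assume g: "g \<in> BH"
  have "bv g \<in> subsp BH" using g by (simp add: subsp_def)
  then show ?thesis using dt unfolding dyn_twist_def Tw_def W_def by blast
qed

lemma TF21: "g \<in> BH \<Longrightarrow> Tw' A B (bv g) (flip21 F) = flip21 F \<diamond> flip21 (Delta_one A B (bv g))"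
  by (simp add: Tw'_flip flip21_flip21 TF flip21_mult)

end

lemma lm_smul_fun[intro]: "lm \<phi> \<Longrightarrow> lm (\<lambda>x. smul c (\<phi> x))"
  unfolding lm_def by (simp add: smul_add_right mult.commute)

context setting
begin

lemma tens_smul3: "tens u (tens v (smul c w)) = smul c (tens u (tens v w))"
  by (rule lm_smul) (rule lmr4)+

lemma W'R: "c \<in> BH \<Longrightarrow> W' A B a b c (Rlift B v) = smul (hcounit A c) (Rlift B (tens (bv b) (bv a) \<star> v))"
proof (rule lm_ext[where \<phi>="\<lambda>v. W' A B a b c (Rlift B v)"])
  assume c: "c \<in> BH"
  fix e :: "'u \<times> 'u"
  show "W' A B a b c (Rlift B (bv e)) = smul (hcounit A c) (Rlift B (tens (bv b) (bv a) \<star> bv e))"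
    by (cases e) (simp only: bv_pair Rlift_t3 W'_t3 act_one[OF c] M2 tens_smul3)
qed ((rule lmr4 lm_smul_fun)+)

lemma Rl_push: "Rlift B (lin f v \<star> R) = lin (\<lambda>a. Rlift B (f a \<star> R)) v"
  by (rule lm_push[where \<phi>="\<lambda>v. Rlift B (v \<star> R)"]) (rule lmr4)+
lemma Rl_smul: "Rlift B (smul c v \<star> R) = smul c (Rlift B (v \<star> R))"
  by (rule lm_smul[where \<phi>="\<lambda>v. Rlift B (v \<star> R)"]) (rule lmr4)+

lemma Rlift_mult: "Rlift B (v \<star> w) = Rlift B v \<diamond> Rlift B w"
proof (rule lm_ext2[where \<phi>="\<lambda>v w. Rlift B (v \<star> w)"])
  fix a b :: "'u \<times> 'u"
  show "Rlift B (bv a \<star> bv b) = Rlift B (bv a) \<diamond> Rlift B (bv b)"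
    by (cases a, cases b) (simp only: bv_pair M2 Rlift_t3 M3 L1_mult)
qed ((rule lmr4)+)

lemma D1_Rlift: "Delta_one A B (bv g) = Rlift B (hcomul A g)"
  unfolding D1_bv Rlift_def by (rule lin_cong) (simp add: split_def tens_lin lin_lin)

lemma counit_l: "lin (\<lambda>q. smul (hcounit A (snd q)) (bv (fst q))) (hcomul A r) = bv r"
  using hopfA unfolding hopf_algebra_def by (simp add: split_def)

lemma TRl: assumes g: "g \<in> BH" shows "Tw' A B (bv g) Rl = Rl \<diamond> Delta_one A B (bv g)"
proof -
  have "Tw' A B (bv g) Rl = lin (\<lambda>p. lin (\<lambda>q. smul (hcounit A (snd q)) (Rlift B (tens (bv (fst q)) (bv (fst p)) \<star> R)))
      (hcomul A (snd p))) (hcomul A g)"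
    unfolding Tw'_bv
  proof (rule lin_cong, rule lin_cong)
    fix p q
    assume p: "p \<in> Poly_Mapping.keys (hcomul A g)" and q: "q \<in> Poly_Mapping.keys (hcomul A (snd p))"
    have "snd p \<in> BH" using comul_keys[OF g p] by simp
    then have "snd q \<in> BH" using comul_keys[OF _ q] by simp
    then show "W' A B (fst p) (fst q) (snd q) Rl = smul (hcounit A (snd q)) (Rlift B (tens (bv (fst q)) (bv (fst p)) \<star> R))"
      by (rule W'R)
  qed
  also have "\<dots> = Rlift B (lin (\<lambda>p. lin (\<lambda>q. smul (hcounit A (snd q)) (tens (bv (fst q)) (bv (fst p))))
      (hcomul A (snd p))) (hcomul A g) \<star> R)"
    by (simp add: Rl_push Rl_smul)
  also have "lin (\<lambda>p. lin (\<lambda>q. smul (hcounit A (snd q)) (tens (bv (fst q)) (bv (fst p)))) (hcomul A (snd p))) (hcomul A g)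
      = flip2 (hcomul A g)"
  proof -
    have "\<And>r (a::'u). lin (\<lambda>q. smul (hcounit A (snd q)) (tens (bv (fst q)) (bv a))) (hcomul A r) = tens (bv r) (bv a)"
    proof -
      fix r a
      have "lin (\<lambda>q. smul (hcounit A (snd q)) (tens (bv (fst q)) (bv a))) (hcomul A r)
          = lin (\<lambda>q. tens (smul (hcounit A (snd q)) (bv (fst q))) (bv a)) (hcomul A r)"
        by (rule lin_cong) (rule lm_smul[symmetric], (rule lmr4)+)
      also have "\<dots> = tens (lin (\<lambda>q. smul (hcounit A (snd q)) (bv (fst q))) (hcomul A r)) (bv a)"
        by (rule lm_push[where \<phi>="\<lambda>w. tens w (bv a)", symmetric]) (rule lmr4)+
      finally show "lin (\<lambda>q. smul (hcounit A (snd q)) (tens (bv (fst q)) (bv a))) (hcomul A r) = tens (bv r) (bv a)"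
        by (simp only: counit_l)
    qed
    then show ?thesis by (simp add: split_def)
  qed
  finally have "Tw' A B (bv g) Rl = Rlift B (flip2 (hcomul A g) \<star> R)" .
  also have "\<dots> = Rl \<diamond> Delta_one A B (bv g)"
    by (simp add: qt_comm[symmetric] Rlift_mult D1_Rlift)
  finally show ?thesis .
qed

lemma TRb: assumes x: "x \<in> BH" shows "Tw' A B (bv x) Rb = Rb \<diamond> Delta_one A B (bv x)"
proof -
  have e1: "Tw' A B (bv x) (flip21 F \<diamond> Rb) = flip21 F \<diamond> Tw' A B (bv x) Rb"
    using inv_left[where E="\<lambda>g. flip21 (Delta_one A B (bv g))", OF TF21 x] DQ' by simp
  have e2: "Tw' A B (bv x) (Rl \<diamond> F) = Rl \<diamond> Tw A B (bv x) F"
    using inv_left[where E="\<lambda>g. Delta_one A B (bv g)", OF TRl x] DQ by simp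
  have "flip21 F \<diamond> Tw' A B (bv x) Rb = Tw' A B (bv x) (flip21 F \<diamond> Rb)" using e1 by simp
  also have "\<dots> = Tw' A B (bv x) (Rl \<diamond> F)" by (simp only: key)
  also have "\<dots> = Rl \<diamond> (F \<diamond> Delta_one A B (bv x))" using e2 TF[OF x] by simp
  also have "\<dots> = (Rl \<diamond> F) \<diamond> Delta_one A B (bv x)" by (simp only: a3.assoc)
  also have "\<dots> = (flip21 F \<diamond> Rb) \<diamond> Delta_one A B (bv x)" by (simp only: key)
  also have "\<dots> = flip21 F \<diamond> (Rb \<diamond> Delta_one A B (bv x))" by (rule a3.assoc)
  finally have "flip21 F \<diamond> Tw' A B (bv x) Rb = flip21 F \<diamond> (Rb \<diamond> Delta_one A B (bv x))" .
  then show ?thesis by (rule a3.cancel_l[OF F21_inv])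
qed

lemma TRb_all: fixes h :: "'u \<Rightarrow>\<^sub>0 'k" assumes h: "h \<in> subsp BH" shows "Tw' A B h Rb = Rb \<diamond> Delta_one A B h"
proof -
  have l1: "lm (\<lambda>h. Tw' A B h Rb)" unfolding Tw'_def Delta2_def by (rule lmr4)+
  have l2: "lm (\<lambda>h. Rb \<diamond> Delta_one A B h)" unfolding Delta_one_def by (rule lmr4)+
  have "Tw' A B h Rb = lin (\<lambda>x. Tw' A B (bv x) Rb) h" by (rule lm_expand[OF l1])
  also have "\<dots> = lin (\<lambda>x. Rb \<diamond> Delta_one A B (bv x)) h"
    using h by (intro lin_cong TRb) (auto simp: subsp_def)
  also have "\<dots> = Rb \<diamond> Delta_one A B h" by (rule lm_expand[OF l2, symmetric])
  finally show ?thesis .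
qed

lemma result: "dyn_R_matrix A BH B Rb"
  unfolding dyn_R_matrix_def
proof (intro conjI ballI)
  fix h :: "'u \<Rightarrow>\<^sub>0 'k" assume "h \<in> subsp BH"
  then show "lin (\<lambda>(a, b, c). lin (\<lambda>(f1, f2, f3).
               tens (bilin (hmul A) (bv b) (bv f1))
                 (tens (bilin (hmul A) (bv a) (bv f2)) (actx B (bv c) (bv f3)))) Rb) (Delta2 A h)
        = Rb \<diamond> Delta_one A B h"
    using TRb_all unfolding Tw'_def W'_def by blast
next
  show "X12 A Rb \<odot> sh2 B Rb \<odot> X23 A Rb = sh1 B Rb \<odot> X13 A Rb \<odot> sh3 B Rb" by (rule DYBE)
qed

end

theorem proposition5p16:
  fixes A :: "('u, 'k::field_char_0) hopf_alg"
    and R :: "'u \<times> 'u \<Rightarrow>\<^sub>0 'k"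
    and BH :: "'u set"
    and B :: "('u, 'l, 'k) base_alg"
    and F :: "'u \<times> 'u \<times> 'l \<Rightarrow>\<^sub>0 'k"
  assumes "quasitriangular A R"
    and "hopf_subalgebra A BH"
    and "base_algebra A BH B"
    and "dyn_twist A BH B F"
  shows "dyn_R_matrix A BH B
           (bilin (mul3 A B) (bilin (mul3 A B) (ainv (mul3 A B) (one3 A B) (flip21 F)) (Rlift B R)) F)"
proof -
  interpret setting A R BH B F using assms by (unfold_locales)
  show ?thesis by (rule result)
qed

end
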